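(* Consider an infinite-horizon MDP with numeric rewards and undiscounted wealth levels, as described in the context. Then, for the lower $\tau$-quantile criterion and for the upper $\tau$-quantile criterion, there exists a stationary deterministic wealth-Markovian policy that is optimal among all policies, in each of the following two cases: (i) $r(s,a)\le 0$ for all $(s,a)\in\mathcal S\times\mathcal A$; (ii) $r(s,a)\ge0$ for all $(s,a)\in\mathcal S\times\mathcal A$, and the optimal lower and upper $\tau$-quantiles admit a finite upper bound.
   Context: An MDP $(\mathcal S,\mathcal A,\mathcal P,r,s_0)$ has finite state set $\mathcal S$, finite action set $\mathcal A$, transition probabilities $\mathcal P(s,a,s')$, a real-valued reward function $r:\mathcal S\times\mathcal A\to\mathbb R$, and initial state $s_0$; the horizon is infinite, and policies are arbitrary (possibly history-dependent, randomized) sequences of decision rules. The wealth of a history $h_t=(s_0,a_0,\dots,s_t)$ is the undiscounted sum $w(h_t)=\sum_{i<t}r(s_i,a_i)$, and the wealth of an infinite episode is the total sum of its rewards (an element of the extended reals, well defined since the rewards have constant sign in each case). For a policy $\pi$, $F^\pi$ and $G^\pi$ are the cumulative ($F^\pi(w)=\mathbb P(\text{wealth}\le w)$) and decumulative ($G^\pi(w)=\mathbb P(\text{wealth}\ge w)$) distribution functions of the episode wealth; lower $\tau$-quantile $\underline{q}^\pi_\tau=\min\{w:F^\pi(w)\ge\tau\}$ ($\tau\in(0,1]$), upper $\tau$-quantile $\overline{q}^\pi_\tau=\max\{w:G^\pi(w)\ge1-\tau\}$ ($\tau\in[0,1)$); a policy is optimal for a criterion if its quantile equals the maximum of that quantile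 over all policies. A policy is stationary deterministic wealth-Markovian if at every time step it applies the same deterministic rule choosing an action as a function of the current state and the current wealth level $w(h_t)$. *)

theory Defs
  imports "HOL-Probability.Probability"
begin

text \<open>
  MDP with finite state type 's, finite action type 'a (all actions available in every state),
  transition kernel P :: 's => 'a => 's pmf, rewards r :: 's => 'a => real, initial state s0.
  A history h_t = (s_0,a_0,...,s_{t-1},a_{t-1},s_t) is represented by the list of past
  state-action pairs together with the current state s_t.  A (general, history-dependent,
  randomized) policy maps each history to a distribution over actions; since the length of the
  history determines the time step t, this is the same as a sequence of decision rules.
\<close>

type_synonym ('s, 'a) policy = "('s \<times> 'a) list \<Rightarrow> 's \<Rightarrow> 'a pmf"

definition cyl_prob ::
  "('s \<Rightarrow> 'a \<Rightarrow> 's pmf) \<Rightarrow> 's \<Rightarrow> ('s, 'a) policy \<Rightarrow> ('s \<times> 'a) list \<Rightarrow> real" where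
  "cyl_prob P s0 \<pi> xs =
     (\<Prod>i<length xs.
        (if i = 0 then (if fst (xs ! 0) = s0 then 1 else 0)
         else pmf (P (fst (xs ! (i - 1))) (snd (xs ! (i - 1)))) (fst (xs ! i)))
        * pmf (\<pi> (take i xs) (fst (xs ! i))) (snd (xs ! i)))"

text \<open>The probability measure on infinite episodes induced by policy \<pi>
  (Ionescu-Tulcea): the probability measure on the stream space whose cylinder
  probabilities are given by cyl_prob (it exists and is unique).\<close>
definition path_measure ::
  "('s \<Rightarrow> 'a \<Rightarrow> 's pmf) \<Rightarrow> 's \<Rightarrow> ('s, 'a) policy \<Rightarrow> ('s \<times> 'a) stream measure" where
  "path_measure P s0 \<pi> =
     (SOME M. sets M = sets (stream_space (count_space UNIV)) \<and> prob_space M \<and>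
        (\<forall>xs. emeasure M (sstart UNIV xs) = ennreal (cyl_prob P s0 \<pi> xs)))"

definition hist_wealth :: "('s \<Rightarrow> 'a \<Rightarrow> real) \<Rightarrow> ('s \<times> 'a) list \<Rightarrow> real" where
  "hist_wealth r h = (\<Sum>(s, a) \<leftarrow> h. r s a)"

definition ep_wealth :: "('s \<Rightarrow> 'a \<Rightarrow> real) \<Rightarrow> ('s \<times> 'a) stream \<Rightarrow> ereal" where
  "ep_wealth r \<omega> = (\<Sum>i. ereal (r (fst (\<omega> !! i)) (snd (\<omega> !! i))))"

definition cdf_w ::
  "('s \<Rightarrow> 'a \<Rightarrow> 's pmf) \<Rightarrow> ('s \<Rightarrow> 'a \<Rightarrow> real) \<Rightarrow> 's \<Rightarrow> ('s, 'a) policy \<Rightarrow> ereal \<Rightarrow> real" where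
  "cdf_w P r s0 \<pi> w =
     measure (path_measure P s0 \<pi>) {\<omega> \<in> space (path_measure P s0 \<pi>). ep_wealth r \<omega> \<le> w}"

definition dcdf_w ::
  "('s \<Rightarrow> 'a \<Rightarrow> 's pmf) \<Rightarrow> ('s \<Rightarrow> 'a \<Rightarrow> real) \<Rightarrow> 's \<Rightarrow> ('s, 'a) policy \<Rightarrow> ereal \<Rightarrow> real" where
  "dcdf_w P r s0 \<pi> w =
     measure (path_measure P s0 \<pi>) {\<omega> \<in> space (path_measure P s0 \<pi>). ep_wealth r \<omega> \<ge> w}"

definition lower_quantile ::
  "('s \<Rightarrow> 'a \<Rightarrow> 's pmf) \<Rightarrow> ('s \<Rightarrow> 'a \<Rightarrow> real) \<Rightarrow> 's \<Rightarrow> ('s, 'a) policy \<Rightarrow> real \<Rightarrow> ereal" where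
  "lower_quantile P r s0 \<pi> \<tau> = (LEAST w. cdf_w P r s0 \<pi> w \<ge> \<tau>)"

definition upper_quantile ::
  "('s \<Rightarrow> 'a \<Rightarrow> 's pmf) \<Rightarrow> ('s \<Rightarrow> 'a \<Rightarrow> real) \<Rightarrow> 's \<Rightarrow> ('s, 'a) policy \<Rightarrow> real \<Rightarrow> ereal" where
  "upper_quantile P r s0 \<pi> \<tau> = (GREATEST w. dcdf_w P r s0 \<pi> w \<ge> 1 - \<tau>)"

definition sdwm_policy :: "('s \<Rightarrow> 'a \<Rightarrow> real) \<Rightarrow> ('s, 'a) policy \<Rightarrow> bool" where
  "sdwm_policy r \<pi> \<longleftrightarrow>
     (\<exists>d :: 's \<Rightarrow> real \<Rightarrow> 'a. \<pi> = (\<lambda>h s. return_pmf (d s (hist_wealth r h))))"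

end

theory Submission
  imports Defs
begin


definition nxt :: "('s \<Rightarrow> 'a \<Rightarrow> 's pmf) \<Rightarrow> 's \<Rightarrow> ('s,'a) policy \<Rightarrow> ('s\<times>'a) list \<Rightarrow> ('s\<times>'a) pmf" where
 "nxt P s0 \<pi> h = bind_pmf (if h = [] then return_pmf s0 else P (fst (last h)) (snd (last h)))
     (\<lambda>s. map_pmf (Pair s) (\<pi> h s))"

lemma pmf_nxt:
  fixes P :: "'s::finite \<Rightarrow> 'a::finite \<Rightarrow> 's pmf"
  shows "pmf (nxt P s0 \<pi> h) (s,a) =
     pmf (if h = [] then return_pmf s0 else P (fst (last h)) (snd (last h))) s * pmf (\<pi> h s) a"
proof -
  let ?\<mu> = "if h = [] then return_pmf s0 else P (fst (last h)) (snd (last h))"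
  have e: "pmf (map_pmf (Pair s') (\<pi> h s')) (s,a) = (if s' = s then pmf (\<pi> h s) a else 0)" for s'
  proof (cases "s' = s")
    case True
    have "inj (Pair s)" by (auto simp: inj_def)
    then show ?thesis using True pmf_map_inj'[of "Pair s" "\<pi> h s" a] by simp
  next
    case False
    then show ?thesis by (auto simp: pmf_eq_0_set_pmf)
  qed
  have "pmf (nxt P s0 \<pi> h) (s,a) = measure_pmf.expectation ?\<mu> (\<lambda>s'. pmf (map_pmf (Pair s') (\<pi> h s')) (s,a))"
    unfolding nxt_def pmf_bind by simp
  also have "\<dots> = (\<Sum>s'\<in>UNIV. pmf (map_pmf (Pair s') (\<pi> h s')) (s,a) * pmf ?\<mu> s')"
    by (rule integral_measure_pmf_real) auto
  also have "\<dots> = (\<Sum>s'\<in>UNIV. (if s' = s then pmf (\<pi> h s) a * pmf ?\<mu> s else 0))"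
    by (intro sum.cong) (auto simp: e)
  also have "\<dots> = pmf ?\<mu> s * pmf (\<pi> h s) a" by simp
  finally show ?thesis .
qed

primrec pre :: "(('s\<times>'a) list \<Rightarrow> ('s\<times>'a)) \<Rightarrow> nat \<Rightarrow> ('s\<times>'a) list" where
  "pre \<xi> 0 = []"
| "pre \<xi> (Suc n) = pre \<xi> n @ [\<xi> (pre \<xi> n)]"

definition path :: "(('s\<times>'a) list \<Rightarrow> ('s\<times>'a)) \<Rightarrow> ('s\<times>'a) stream" where
  "path \<xi> = to_stream (\<lambda>n. \<xi> (pre \<xi> n))"

lemma snth_path: "path \<xi> !! n = \<xi> (pre \<xi> n)"
  by (simp add: path_def to_stream_def)

lemma pre_take1:
  assumes "\<forall>j<i. \<xi> (take j xs) = xs ! j" "i \<le> length xs"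
  shows "pre \<xi> i = take i xs"
  using assms
proof (induction i)
  case (Suc i)
  then have "pre \<xi> i = take i xs" by auto
  then show ?case using Suc.prems by (simp add: take_Suc_conv_app_nth)
qed simp

lemma pre_take2:
  assumes "\<forall>j<i. \<xi> (pre \<xi> j) = xs ! j" "i \<le> length xs"
  shows "pre \<xi> i = take i xs"
  using assms
proof (induction i)
  case (Suc i)
  then have h: "pre \<xi> i = take i xs" by auto
  then have "\<xi> (take i xs) = xs ! i" using Suc.prems(1) by (metis lessI)
  then show ?case using h Suc.prems by (simp add: take_Suc_conv_app_nth)
qed simp

lemma path_sstart:
  "path \<xi> \<in> sstart UNIV xs \<longleftrightarrow> (\<forall>i<length xs. \<xi> (take i xs) = xs ! i)"
proof -
  have "path \<xi> \<in> sstart UNIV xs \<longleftrightarrow> (\<forall>i<length xs. \<xi> (pre \<xi> i) = xs ! i)"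
    by (simp add: sstart_eq streams_UNIV snth_path)
  also have "\<dots> \<longleftrightarrow> (\<forall>i<length xs. \<xi> (take i xs) = xs ! i)"
  proof
    assume a: "\<forall>i<length xs. \<xi> (pre \<xi> i) = xs ! i"
    show "\<forall>i<length xs. \<xi> (take i xs) = xs ! i"
    proof (intro allI impI)
      fix i assume "i < length xs"
      then have "pre \<xi> i = take i xs" using a by (intro pre_take2) auto
      then show "\<xi> (take i xs) = xs ! i" using a \<open>i < length xs\<close> by metis
    qed
  next
    assume a: "\<forall>i<length xs. \<xi> (take i xs) = xs ! i"
    show "\<forall>i<length xs. \<xi> (pre \<xi> i) = xs ! i"
    proof (intro allI impI)
      fix i assume "i < length xs"
      then have "pre \<xi> i = take i xs" using a by (intro pre_take1) auto
      then show "\<xi> (pre \<xi> i) = xs ! i" using a \<open>i < length xs\<close> by metis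
    qed
  qed
  finally show ?thesis .
qed


context
  fixes P :: "'s::finite \<Rightarrow> 'a::finite \<Rightarrow> 's pmf" and s0 :: 's and \<pi> :: "('s,'a) policy"
begin

definition Om :: "(('s\<times>'a) list \<Rightarrow> ('s\<times>'a)) measure" where
  "Om = PiM UNIV (\<lambda>h. measure_pmf (nxt P s0 \<pi> h))"

lemma comp_meas: "(\<lambda>\<xi>. \<xi> h) \<in> measurable Om (count_space UNIV)"
proof -
  have "(\<lambda>\<xi>. \<xi> h) \<in> measurable Om (measure_pmf (nxt P s0 \<pi> h))"
    unfolding Om_def by (rule measurable_component_singleton) simp
  then show ?thesis by (simp add: measurable_cong_sets)
qed

lemma pre_meas: "(\<lambda>\<xi>. pre \<xi> n) \<in> measurable Om (count_space UNIV)"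
proof (induction n)
  case 0
  then show ?case by simp
next
  case (Suc n)
  have "(\<lambda>\<xi>. (\<lambda>h \<xi>. h @ [\<xi> h]) (pre \<xi> n) \<xi>) \<in> measurable Om (count_space UNIV)"
  proof (rule measurable_compose_countable[OF _ Suc])
    fix h :: "('s\<times>'a) list"
    show "(\<lambda>\<xi>. h @ [\<xi> h]) \<in> measurable Om (count_space UNIV)"
      using measurable_compose[OF comp_meas[of h], of "\<lambda>x. h @ [x]" "count_space UNIV"] by simp
  qed
  then show ?case by simp
qed

lemma path_meas: "path \<in> measurable Om (stream_space (count_space UNIV))"
proof (rule measurable_stream_space2)
  fix n
  have "(\<lambda>\<xi>. (\<lambda>h \<xi>. \<xi> h) (pre \<xi> n) \<xi>) \<in> measurable Om (count_space UNIV)"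
    by (rule measurable_compose_countable[OF comp_meas pre_meas])
  then show "(\<lambda>\<xi>. path \<xi> !! n) \<in> measurable Om (count_space UNIV)"
    by (simp add: snth_path)
qed

lemma prob_Om: "prob_space Om"
  unfolding Om_def by (intro prob_space_PiM) (simp add: prob_space_measure_pmf)

lemma cyl_Om:
  "emeasure (distr Om (stream_space (count_space UNIV)) path) (sstart UNIV xs) = ennreal (cyl_prob P s0 \<pi> xs)"
proof -
  interpret product_prob_space "\<lambda>h. measure_pmf (nxt P s0 \<pi> h)" UNIV
    by unfold_locales
  let ?J = "(\<lambda>i. take i xs) ` {..<length xs}"
  let ?X = "\<lambda>h. {xs ! length h}"
  have inj: "inj_on (\<lambda>i. take i xs) {..<length xs}"
    by (rule inj_onI) (metis length_take lessThan_iff min.absorb4)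
  have "emeasure (distr Om (stream_space (count_space UNIV)) path) (sstart UNIV xs)
      = emeasure Om (path -` sstart UNIV xs \<inter> space Om)"
    by (rule emeasure_distr[OF path_meas sstart_sets])
  also have "path -` sstart UNIV xs \<inter> space Om = {\<xi>\<in>space Om. \<forall>h\<in>?J. \<xi> h \<in> ?X h}"
    by (auto simp: path_sstart)
  also have "emeasure Om \<dots> = (\<Prod>h\<in>?J. emeasure (measure_pmf (nxt P s0 \<pi> h)) (?X h))"
    unfolding Om_def by (rule emeasure_PiM_Collect) auto
  also have "\<dots> = (\<Prod>i<length xs. emeasure (measure_pmf (nxt P s0 \<pi> (take i xs))) {xs ! i})"
    by (subst prod.reindex[OF inj]) (auto intro!: prod.cong)
  also have "\<dots> = (\<Prod>i<length xs. ennreal (pmf (nxt P s0 \<pi> (take i xs)) (xs ! i)))"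
    by (simp add: emeasure_pmf_single)
  also have "\<dots> = ennreal (\<Prod>i<length xs. pmf (nxt P s0 \<pi> (take i xs)) (xs ! i))"
    by (simp add: prod_ennreal)
  also have "(\<Prod>i<length xs. pmf (nxt P s0 \<pi> (take i xs)) (xs ! i)) = cyl_prob P s0 \<pi> xs"
    unfolding cyl_prob_def
  proof (intro prod.cong refl)
    fix i assume i: "i \<in> {..<length xs}"
    obtain s a where sa: "xs ! i = (s, a)" by fastforce
    show "pmf (nxt P s0 \<pi> (take i xs)) (xs ! i) =
        (if i = 0 then if fst (xs ! 0) = s0 then 1 else 0
         else pmf (P (fst (xs ! (i - 1))) (snd (xs ! (i - 1)))) (fst (xs ! i))) *
        pmf (\<pi> (take i xs) (fst (xs ! i))) (snd (xs ! i))"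
    proof (cases "i = 0")
      case True
      then show ?thesis using sa by (simp add: pmf_nxt pmf_return)
    next
      case False
      then have "take i xs \<noteq> []" using i by auto
      moreover have "last (take i xs) = xs ! (i - 1)"
      proof -
        have "take i xs \<noteq> []" using False i by auto
        then have "last (take i xs) = take i xs ! (length (take i xs) - 1)" by (rule last_conv_nth)
        also have "\<dots> = xs ! (i - 1)" using False i by (simp add: min_def)
        finally show ?thesis .
      qed
      ultimately show ?thesis using sa False by (simp add: pmf_nxt)
    qed
  qed
  finally show ?thesis .
qed

lemma exists_path_measure:
  "\<exists>M. sets M = sets (stream_space (count_space UNIV)) \<and> prob_space M \<and>
        (\<forall>xs. emeasure M (sstart UNIV xs) = ennreal (cyl_prob P s0 \<pi> xs))"
proof (intro exI conjI allI)
  show "sets (distr Om (stream_space (count_space UNIV)) path) = sets (stream_space (count_space UNIV))"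
    by simp
  show "prob_space (distr Om (stream_space (count_space UNIV)) path)"
    by (rule prob_space.prob_space_distr[OF prob_Om path_meas])
  show "emeasure (distr Om (stream_space (count_space UNIV)) path) (sstart UNIV xs) = ennreal (cyl_prob P s0 \<pi> xs)" for xs
    by (rule cyl_Om)
qed

end

lemma path_measure_props:
  fixes P :: "'s::finite \<Rightarrow> 'a::finite \<Rightarrow> 's pmf"
  shows "sets (path_measure P s0 \<pi>) = sets (stream_space (count_space UNIV))"
    and "prob_space (path_measure P s0 \<pi>)"
    and "emeasure (path_measure P s0 \<pi>) (sstart UNIV xs) = ennreal (cyl_prob P s0 \<pi> xs)"
  using someI_ex[OF exists_path_measure[of P s0 \<pi>]] unfolding path_measure_def by auto


fun cyl :: "('s \<Rightarrow> 'a \<Rightarrow> 's pmf) \<Rightarrow> 's pmf \<Rightarrow> ('s,'a) policy \<Rightarrow> ('s\<times>'a) list \<Rightarrow> real" where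
  "cyl P \<mu> \<pi> [] = 1"
| "cyl P \<mu> \<pi> (x#xs) = pmf \<mu> (fst x) * pmf (\<pi> [] (fst x)) (snd x) * cyl P (P (fst x) (snd x)) (\<lambda>h. \<pi> (x#h)) xs"

lemma cyl_nonneg: "0 \<le> cyl P \<mu> \<pi> xs"
  by (induction xs arbitrary: \<mu> \<pi>) auto

lemma cyl_gen:
  "(\<Prod>i<length xs.
        (if i = 0 then pmf \<mu> (fst (xs ! 0))
         else pmf (P (fst (xs ! (i - 1))) (snd (xs ! (i - 1)))) (fst (xs ! i)))
        * pmf (\<pi> (take i xs) (fst (xs ! i))) (snd (xs ! i))) = cyl P \<mu> \<pi> xs"
proof (induction xs arbitrary: \<mu> \<pi>)
  case Nil
  then show ?case by simp
next
  case (Cons x xs)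
  have "(\<Prod>i<length (x#xs).
        (if i = 0 then pmf \<mu> (fst ((x#xs) ! 0))
         else pmf (P (fst ((x#xs) ! (i - 1))) (snd ((x#xs) ! (i - 1)))) (fst ((x#xs) ! i)))
        * pmf (\<pi> (take i (x#xs)) (fst ((x#xs) ! i))) (snd ((x#xs) ! i)))
     = (pmf \<mu> (fst x) * pmf (\<pi> [] (fst x)) (snd x)) *
       (\<Prod>i<length xs.
        (if i = 0 then pmf (P (fst x) (snd x)) (fst (xs ! 0))
         else pmf (P (fst (xs ! (i - 1))) (snd (xs ! (i - 1)))) (fst (xs ! i)))
        * pmf ((\<lambda>h. \<pi> (x#h)) (take i xs) (fst (xs ! i))) (snd (xs ! i)))"
    by (simp only: length_Cons prod.lessThan_Suc_shift)
       (auto intro!: prod.cong arg_cong2[where f="(*)"] simp: nth_Cons')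
  also have "\<dots> = cyl P \<mu> \<pi> (x#xs)"
    using Cons.IH[of "P (fst x) (snd x)" "\<lambda>h. \<pi> (x#h)"] by simp
  finally show ?case .
qed

lemma cyl_prob_cyl: "cyl_prob P s0 \<pi> xs = cyl P (return_pmf s0) \<pi> xs"
  unfolding cyl_prob_def cyl_gen[symmetric]
  by (intro prod.cong refl) (simp add: pmf_return)

definition tsum :: "('s \<Rightarrow> 'a \<Rightarrow> 's pmf) \<Rightarrow> 's pmf \<Rightarrow> ('s,'a) policy \<Rightarrow> nat \<Rightarrow> (('s\<times>'a) list \<Rightarrow> bool) \<Rightarrow> real" where
  "tsum P \<mu> \<pi> n Q = (\<Sum>xs\<in>{xs. length xs = n}. if Q xs then cyl P \<mu> \<pi> xs else 0)"

lemma tsum_0: "tsum P \<mu> \<pi> 0 Q = (if Q [] then 1 else 0)"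
  by (simp add: tsum_def)

lemma tsum_Suc:
  fixes P :: "'s::finite \<Rightarrow> 'a::finite \<Rightarrow> 's pmf"
  shows "tsum P \<mu> \<pi> (Suc n) Q =
    (\<Sum>x\<in>UNIV. pmf \<mu> (fst x) * pmf (\<pi> [] (fst x)) (snd x) *
        tsum P (P (fst x) (snd x)) (\<lambda>h. \<pi> (x#h)) n (\<lambda>xs. Q (x#xs)))"
proof -
  have fin: "finite {xs :: ('s\<times>'a) list. length xs = n}"
    using finite_lists_length_eq[of "UNIV :: ('s\<times>'a) set" n] by simp
  have eq: "{xs :: ('s\<times>'a) list. length xs = Suc n} = (\<lambda>(x,xs). x#xs) ` (UNIV \<times> {xs. length xs = n})"
    by (auto simp: length_Suc_conv image_iff)
  have inj: "inj_on (\<lambda>(x,xs). x#xs) (UNIV \<times> {xs :: ('s\<times>'a) list. length xs = n})"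
    by (auto simp: inj_on_def)
  have "tsum P \<mu> \<pi> (Suc n) Q = (\<Sum>(x,xs)\<in>UNIV \<times> {xs. length xs = n}. if Q (x#xs) then cyl P \<mu> \<pi> (x#xs) else 0)"
    unfolding tsum_def eq by (subst sum.reindex[OF inj]) (simp add: case_prod_unfold)
  also have "\<dots> = (\<Sum>x\<in>UNIV. \<Sum>xs\<in>{xs. length xs = n}. if Q (x#xs) then cyl P \<mu> \<pi> (x#xs) else 0)"
    by (rule sum.cartesian_product[symmetric])
  also have "\<dots> = (\<Sum>x\<in>UNIV. pmf \<mu> (fst x) * pmf (\<pi> [] (fst x)) (snd x) *
        tsum P (P (fst x) (snd x)) (\<lambda>h. \<pi> (x#h)) n (\<lambda>xs. Q (x#xs)))"
    unfolding tsum_def by (intro sum.cong refl) (auto simp: sum_distrib_left intro!: sum.cong)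
  finally show ?thesis .
qed

lemma tsum_mix:
  fixes P :: "'s::finite \<Rightarrow> 'a::finite \<Rightarrow> 's pmf"
  shows "tsum P \<mu> \<pi> n Q = (\<Sum>s\<in>UNIV. pmf \<mu> s * tsum P (return_pmf s) \<pi> n Q)"
proof (cases n)
  case 0
  have "(\<Sum>s\<in>UNIV. pmf \<mu> s) = 1" by (rule sum_pmf_eq_1) auto
  then show ?thesis using 0 by (simp add: tsum_0 sum_distrib_right[symmetric])
next
  case (Suc m)
  have "(\<Sum>s\<in>UNIV. pmf \<mu> s * tsum P (return_pmf s) \<pi> n Q) =
    (\<Sum>s\<in>UNIV. \<Sum>x\<in>UNIV. pmf \<mu> s * (indicator {fst x} s * pmf (\<pi> [] (fst x)) (snd x) *
        tsum P (P (fst x) (snd x)) (\<lambda>h. \<pi> (x#h)) m (\<lambda>xs. Q (x#xs))))"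
    unfolding Suc tsum_Suc by (simp add: sum_distrib_left pmf_return)
  also have "\<dots> = (\<Sum>x\<in>UNIV. \<Sum>s\<in>UNIV. pmf \<mu> s * (indicator {fst x} s * pmf (\<pi> [] (fst x)) (snd x) *
        tsum P (P (fst x) (snd x)) (\<lambda>h. \<pi> (x#h)) m (\<lambda>xs. Q (x#xs))))"
    by (rule sum.swap)
  also have "\<dots> = (\<Sum>x\<in>UNIV. pmf \<mu> (fst x) * pmf (\<pi> [] (fst x)) (snd x) *
        tsum P (P (fst x) (snd x)) (\<lambda>h. \<pi> (x#h)) m (\<lambda>xs. Q (x#xs)))"
  proof (intro sum.cong refl)
    fix x :: "'s\<times>'a"
    have "(\<Sum>s\<in>UNIV. pmf \<mu> s * (indicator {fst x} s * pmf (\<pi> [] (fst x)) (snd x) *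
        tsum P (P (fst x) (snd x)) (\<lambda>h. \<pi> (x#h)) m (\<lambda>xs. Q (x#xs))))
      = (\<Sum>s\<in>UNIV. if s = fst x then pmf \<mu> (fst x) * pmf (\<pi> [] (fst x)) (snd x) *
        tsum P (P (fst x) (snd x)) (\<lambda>h. \<pi> (x#h)) m (\<lambda>xs. Q (x#xs)) else 0)"
      by (intro sum.cong refl) (auto simp: indicator_def)
    also have "\<dots> = pmf \<mu> (fst x) * pmf (\<pi> [] (fst x)) (snd x) *
        tsum P (P (fst x) (snd x)) (\<lambda>h. \<pi> (x#h)) m (\<lambda>xs. Q (x#xs))"
      by simp
    finally show "(\<Sum>s\<in>UNIV. pmf \<mu> s * (indicator {fst x} s * pmf (\<pi> [] (fst x)) (snd x) *
        tsum P (P (fst x) (snd x)) (\<lambda>h. \<pi> (x#h)) m (\<lambda>xs. Q (x#xs)))) = 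
       pmf \<mu> (fst x) * pmf (\<pi> [] (fst x)) (snd x) *
        tsum P (P (fst x) (snd x)) (\<lambda>h. \<pi> (x#h)) m (\<lambda>xs. Q (x#xs))" .
  qed
  finally show ?thesis unfolding Suc tsum_Suc by simp
qed

lemma tsum_ret_Suc:
  fixes P :: "'s::finite \<Rightarrow> 'a::finite \<Rightarrow> 's pmf"
  shows "tsum P (return_pmf s) \<pi> (Suc n) Q =
    (\<Sum>a\<in>UNIV. pmf (\<pi> [] s) a * (\<Sum>s'\<in>UNIV. pmf (P s a) s' *
        tsum P (return_pmf s') (\<lambda>h. \<pi> ((s,a)#h)) n (\<lambda>xs. Q ((s,a)#xs))))"
proof -
  have "tsum P (return_pmf s) \<pi> (Suc n) Q =
    (\<Sum>x\<in>UNIV. pmf (return_pmf s) (fst x) * pmf (\<pi> [] (fst x)) (snd x) *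
        tsum P (P (fst x) (snd x)) (\<lambda>h. \<pi> (x#h)) n (\<lambda>xs. Q (x#xs)))"
    by (rule tsum_Suc)
  also have "\<dots> = (\<Sum>s1\<in>UNIV. \<Sum>a\<in>UNIV. pmf (return_pmf s) s1 * pmf (\<pi> [] s1) a *
        tsum P (P s1 a) (\<lambda>h. \<pi> ((s1,a)#h)) n (\<lambda>xs. Q ((s1,a)#xs)))"
  proof -
    have "(\<Sum>x\<in>UNIV. pmf (return_pmf s) (fst x) * pmf (\<pi> [] (fst x)) (snd x) *
        tsum P (P (fst x) (snd x)) (\<lambda>h. \<pi> (x#h)) n (\<lambda>xs. Q (x#xs))) =
      (\<Sum>(s1,a)\<in>UNIV\<times>UNIV. pmf (return_pmf s) s1 * pmf (\<pi> [] s1) a *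
        tsum P (P s1 a) (\<lambda>h. \<pi> ((s1,a)#h)) n (\<lambda>xs. Q ((s1,a)#xs)))"
      by (simp add: case_prod_beta)
    also have "\<dots> = (\<Sum>s1\<in>UNIV. \<Sum>a\<in>UNIV. pmf (return_pmf s) s1 * pmf (\<pi> [] s1) a *
        tsum P (P s1 a) (\<lambda>h. \<pi> ((s1,a)#h)) n (\<lambda>xs. Q ((s1,a)#xs)))"
      by (rule sum.cartesian_product[symmetric])
    finally show ?thesis .
  qed
  also have "\<dots> = (\<Sum>s1\<in>UNIV. if s1 = s then (\<Sum>a\<in>UNIV. pmf (\<pi> [] s) a *
        tsum P (P s a) (\<lambda>h. \<pi> ((s,a)#h)) n (\<lambda>xs. Q ((s,a)#xs))) else 0)"
    by (intro sum.cong refl) (auto simp: pmf_return)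
  also have "\<dots> = (\<Sum>a\<in>UNIV. pmf (\<pi> [] s) a *
        tsum P (P s a) (\<lambda>h. \<pi> ((s,a)#h)) n (\<lambda>xs. Q ((s,a)#xs)))"
    by simp
  also have "\<dots> = (\<Sum>a\<in>UNIV. pmf (\<pi> [] s) a * (\<Sum>s'\<in>UNIV. pmf (P s a) s' *
        tsum P (return_pmf s') (\<lambda>h. \<pi> ((s,a)#h)) n (\<lambda>xs. Q ((s,a)#xs))))"
    by (subst tsum_mix) simp
  finally show ?thesis .
qed

lemma tsum_True:
  fixes P :: "'s::finite \<Rightarrow> 'a::finite \<Rightarrow> 's pmf"
  shows "tsum P (return_pmf s) \<pi> n (\<lambda>_. True) = 1"
proof (induction n arbitrary: s \<pi>)
  case 0
  then show ?case by (simp add: tsum_0)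
next
  case (Suc n)
  have "\<And>a. (\<Sum>s'\<in>UNIV. pmf (P s a) s') = 1" by (rule sum_pmf_eq_1) auto
  moreover have "(\<Sum>a\<in>UNIV. pmf (\<pi> [] s) a) = 1" by (rule sum_pmf_eq_1) auto
  ultimately show ?case by (simp add: tsum_ret_Suc Suc)
qed

lemma tsum_nonneg: "0 \<le> tsum P \<mu> \<pi> n Q"
  unfolding tsum_def by (intro sum_nonneg) (simp add: cyl_nonneg)

lemma tsum_mono:
  fixes P :: "'s::finite \<Rightarrow> 'a::finite \<Rightarrow> 's pmf"
  assumes "\<And>xs. Q xs \<Longrightarrow> Q' xs"
  shows "tsum P \<mu> \<pi> n Q \<le> tsum P \<mu> \<pi> n Q'"
  unfolding tsum_def using assms by (intro sum_mono) (auto simp: cyl_nonneg)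

lemma tsum_le_1:
  fixes P :: "'s::finite \<Rightarrow> 'a::finite \<Rightarrow> 's pmf"
  shows "tsum P (return_pmf s) \<pi> n Q \<le> 1"
  using tsum_mono[of Q "\<lambda>_. True" P "return_pmf s" \<pi> n] tsum_True[of P s \<pi> n] by simp

lemma stake_eq_iff: "stake n \<omega> = xs \<longleftrightarrow> length xs = n \<and> (\<forall>i<n. \<omega> !! i = xs ! i)"
  by (auto simp: list_eq_iff_nth_eq)

lemma in_sstart_UNIV: "\<omega> \<in> sstart UNIV xs \<longleftrightarrow> stake (length xs) \<omega> = xs"
  by (auto simp: sstart_eq streams_UNIV stake_eq_iff)

lemma stake_set_UN: "{\<omega>. Q (stake n \<omega>)} = (\<Union>xs\<in>{xs. length xs = n \<and> Q xs}. sstart UNIV xs)"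
  by (auto simp: in_sstart_UNIV)

lemma space_pm:
  fixes P :: "'s::finite \<Rightarrow> 'a::finite \<Rightarrow> 's pmf"
  shows "space (path_measure P s0 \<pi>) = UNIV"
  using sets_eq_imp_space_eq[OF path_measure_props(1)[of P s0 \<pi>]]
  by (simp add: space_stream_space streams_UNIV)

lemma sets_pm:
  fixes P :: "'s::finite \<Rightarrow> 'a::finite \<Rightarrow> 's pmf"
  shows "{\<omega>. Q (stake n \<omega>)} \<in> sets (path_measure P s0 \<pi>)"
proof -
  have "{\<omega>. Q (stake n \<omega>)} = (\<Union>xs\<in>{xs. length xs = n \<and> Q xs}. sstart UNIV xs)"
    by (rule stake_set_UN)
  also have "\<dots> \<in> sets (path_measure P s0 \<pi>)"
    unfolding path_measure_props(1)
    by (intro sets.countable_UN' countable_finite) (auto intro: sstart_sets finite_subset[OF _ finite_lists_length_eq[of UNIV n]])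
  finally show ?thesis .
qed

lemma measure_stake:
  fixes P :: "'s::finite \<Rightarrow> 'a::finite \<Rightarrow> 's pmf"
  shows "measure (path_measure P s0 \<pi>) {\<omega>. Q (stake n \<omega>)} = tsum P (return_pmf s0) \<pi> n Q"
proof -
  let ?M = "path_measure P s0 \<pi>"
  let ?L = "{xs :: ('s\<times>'a) list. length xs = n \<and> Q xs}"
  have fin: "finite {xs :: ('s\<times>'a) list. length xs = n}"
    using finite_lists_length_eq[of "UNIV :: ('s\<times>'a) set" n] by simp
  have finL: "finite ?L" by (rule finite_subset[OF _ fin]) auto
  interpret prob_space ?M by (rule path_measure_props(2))
  have "{\<omega>. Q (stake n \<omega>)} = (\<Union>xs\<in>?L. sstart UNIV xs)"
    by (rule stake_set_UN)
  then have "measure ?M {\<omega>. Q (stake n \<omega>)} = measure ?M (\<Union>xs\<in>?L. sstart UNIV xs)" by simp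
  also have "\<dots> = (\<Sum>xs\<in>?L. measure ?M (sstart UNIV xs))"
  proof (rule finite_measure_finite_Union[OF finL])
    show "(\<lambda>xs. sstart UNIV xs) ` ?L \<subseteq> events"
      by (simp add: image_subset_iff path_measure_props(1) sstart_sets)
    show "disjoint_family_on (\<lambda>xs. sstart UNIV xs) ?L"
      by (auto simp: disjoint_family_on_def sstart_eq streams_UNIV list_eq_iff_nth_eq)
  qed
  also have "\<dots> = (\<Sum>xs\<in>?L. cyl_prob P s0 \<pi> xs)"
    by (intro sum.cong refl)
       (simp add: measure_def path_measure_props(3) cyl_prob_cyl cyl_nonneg)
  also have "\<dots> = tsum P (return_pmf s0) \<pi> n Q"
    unfolding tsum_def cyl_prob_cyl[symmetric]
    by (rule sum.mono_neutral_cong_left[OF fin]) auto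
  finally show ?thesis .
qed


lemma hw_Nil[simp]: "hist_wealth r [] = 0" by (simp add: hist_wealth_def)
lemma hw_Cons[simp]: "hist_wealth r (x#xs) = r (fst x) (snd x) + hist_wealth r xs"
  by (simp add: hist_wealth_def case_prod_beta)
lemma hw_append[simp]: "hist_wealth r (xs @ ys) = hist_wealth r xs + hist_wealth r ys"
  by (induction xs) auto

lemma hw_stake: "hist_wealth r (stake n \<omega>) = (\<Sum>i<n. r (fst (\<omega> !! i)) (snd (\<omega> !! i)))"
proof (induction n)
  case (Suc n)
  then show ?case by (simp del: stake.simps add: stake_Suc)
qed simp

definition sgn_ok :: "('s \<Rightarrow> 'a \<Rightarrow> real) \<Rightarrow> bool" where
  "sgn_ok r \<longleftrightarrow> (\<forall>s a. r s a \<le> 0) \<or> (\<forall>s a. r s a \<ge> 0)"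

lemma Min_eq_Inf_ereal:
  fixes A :: "ereal set"
  assumes "finite A" "A \<noteq> {}" shows "Inf A = Min A"
  by (meson Inf_greatest Inf_lower Min.coboundedI Min_in assms order_antisym)

lemma Max_eq_Sup_ereal:
  fixes A :: "ereal set"
  assumes "finite A" "A \<noteq> {}" shows "Sup A = Max A"
  by (meson Sup_least Sup_upper Max.coboundedI Max_in assms order_antisym)

context
  fixes r :: "'s::finite \<Rightarrow> 'a::finite \<Rightarrow> real"
begin

lemma abs_sum_list_same_sign:
  fixes ys :: "real list"
  assumes "(\<forall>y\<in>set ys. y \<le> 0) \<or> (\<forall>y\<in>set ys. y \<ge> 0)"
  shows "\<bar>sum_list ys\<bar> = sum_list (map abs ys)"
  using assms
proof (induction ys)
  case (Cons y ys)
  then have ih: "\<bar>sum_list ys\<bar> = sum_list (map abs ys)" by auto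
  show ?case
  proof (cases "\<forall>y\<in>set (y#ys). y \<le> 0")
    case True
    then have "sum_list ys \<le> 0" by (intro sum_list_nonpos) auto
    then show ?thesis using True ih by auto
  next
    case False
    then have F: "\<forall>y\<in>set (y#ys). y \<ge> 0" using Cons.prems by auto
    then have "sum_list ys \<ge> 0" by (intro sum_list_nonneg) auto
    then show ?thesis using F ih by auto
  qed
qed simp

lemma sum_list_abs_ge:
  fixes ys :: "real list"
  assumes "\<forall>y\<in>set ys. \<delta> \<le> \<bar>y\<bar>"
  shows "real (length ys) * \<delta> \<le> sum_list (map abs ys)"
  using assms by (induction ys) (auto simp: algebra_simps)

lemma hw_filter: "hist_wealth r h = sum_list (filter (\<lambda>x. x \<noteq> 0) (map (\<lambda>x. r (fst x) (snd x)) h))"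
  by (induction h) auto

lemma locally_finite:
  assumes "sgn_ok r"
  shows "finite {hist_wealth r h | h. \<bar>hist_wealth r h\<bar> \<le> L}"
proof -
  let ?N = "{r s a | s a. r s a \<noteq> 0}"
  have finN: "finite ?N"
  proof -
    have "?N \<subseteq> (\<lambda>(s,a). r s a) ` UNIV" by auto
    then show ?thesis by (rule finite_subset) simp
  qed
  show ?thesis
  proof (cases "?N = {}")
    case True
    then have "\<And>h. hist_wealth r h = 0" by (simp add: hw_filter filter_False)
    then have "{hist_wealth r h | h. \<bar>hist_wealth r h\<bar> \<le> L} \<subseteq> {0}" by auto
    then show ?thesis by (rule finite_subset) simp
  next
    case False
    define \<delta> where "\<delta> = Min (abs ` ?N)"
    have \<delta>pos: "\<delta> > 0" unfolding \<delta>_def using False finN by (subst Min_gr_iff) auto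
    have \<delta>le: "\<And>y. y \<in> ?N \<Longrightarrow> \<delta> \<le> \<bar>y\<bar>" unfolding \<delta>_def using finN by (intro Min_le) auto
    define K where "K = nat (ceiling (L / \<delta>))"
    have "{hist_wealth r h | h. \<bar>hist_wealth r h\<bar> \<le> L} \<subseteq> sum_list ` {ys. set ys \<subseteq> ?N \<and> length ys \<le> K}"
    proof
      fix x assume "x \<in> {hist_wealth r h | h. \<bar>hist_wealth r h\<bar> \<le> L}"
      then obtain h where x: "x = hist_wealth r h" and L: "\<bar>hist_wealth r h\<bar> \<le> L" by auto
      define ys where "ys = filter (\<lambda>x. x \<noteq> 0) (map (\<lambda>x. r (fst x) (snd x)) h)"
      have set: "set ys \<subseteq> ?N" unfolding ys_def by auto
      have sgn: "(\<forall>y\<in>set ys. y \<le> 0) \<or> (\<forall>y\<in>set ys. y \<ge> 0)"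
        using assms unfolding sgn_ok_def ys_def by auto
      have "real (length ys) * \<delta> \<le> sum_list (map abs ys)"
        using set \<delta>le by (intro sum_list_abs_ge) auto
      also have "\<dots> = \<bar>sum_list ys\<bar>" using abs_sum_list_same_sign[OF sgn] by simp
      also have "\<dots> \<le> L" using L by (simp add: hw_filter ys_def)
      finally have "real (length ys) * \<delta> \<le> L" .
      then have "real (length ys) \<le> L / \<delta>" using \<delta>pos by (simp add: field_simps)
      then have "length ys \<le> K" unfolding K_def by linarith
      moreover have "x = sum_list ys" by (simp add: x hw_filter ys_def)
      ultimately show "x \<in> sum_list ` {ys. set ys \<subseteq> ?N \<and> length ys \<le> K}" using set by auto
    qed
    moreover have "finite {ys. set ys \<subseteq> ?N \<and> length ys \<le> K}"
      by (rule finite_lists_length_le[OF finN])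
    ultimately show ?thesis using finite_subset by blast
  qed
qed

definition Dw :: "real set" where "Dw = range (hist_wealth r)"

lemma Dw_fin:
  assumes "sgn_ok r" shows "finite (Dw \<inter> {a..b})"
proof -
  have ab: "\<And>x::real. a \<le> x \<Longrightarrow> x \<le> b \<Longrightarrow> \<bar>x\<bar> \<le> max \<bar>a\<bar> \<bar>b\<bar>" by auto
  have "Dw \<inter> {a..b} \<subseteq> {hist_wealth r h | h. \<bar>hist_wealth r h\<bar> \<le> max \<bar>a\<bar> \<bar>b\<bar>}"
    unfolding Dw_def using ab by fastforce
  then show ?thesis using locally_finite[OF assms] finite_subset by blast
qed

lemma ep_wealth_INF:
  assumes "\<forall>s a. r s a \<le> 0"
  shows "ep_wealth r \<omega> = (INF n. ereal (hist_wealth r (stake n \<omega>)))"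
proof -
  let ?f = "\<lambda>i. ereal (r (fst (\<omega> !! i)) (snd (\<omega> !! i)))"
  have ps: "(\<Sum>i<n. ?f i) = ereal (hist_wealth r (stake n \<omega>))" for n
    by (simp add: hw_stake sum_ereal)
  have dec: "decseq (\<lambda>n. ereal (hist_wealth r (stake n \<omega>)))"
    by (rule decseq_SucI) (simp del: stake.simps add: stake_Suc assms)
  have "?f sums (INF n. ereal (hist_wealth r (stake n \<omega>)))"
    unfolding sums_def ps by (rule LIMSEQ_INF[OF dec])
  then show ?thesis unfolding ep_wealth_def by (simp add: sums_unique[symmetric])
qed

lemma ep_wealth_SUP:
  assumes "\<forall>s a. r s a \<ge> 0"
  shows "ep_wealth r \<omega> = (SUP n. ereal (hist_wealth r (stake n \<omega>)))"
proof -
  let ?f = "\<lambda>i. ereal (r (fst (\<omega> !! i)) (snd (\<omega> !! i)))"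
  have ps: "(\<Sum>i<n. ?f i) = ereal (hist_wealth r (stake n \<omega>))" for n
    by (simp add: hw_stake sum_ereal)
  have inc: "incseq (\<lambda>n. ereal (hist_wealth r (stake n \<omega>)))"
    by (rule incseq_SucI) (simp del: stake.simps add: stake_Suc assms)
  have "?f sums (SUP n. ereal (hist_wealth r (stake n \<omega>)))"
    unfolding sums_def ps by (rule LIMSEQ_SUP[OF inc])
  then show ?thesis unfolding ep_wealth_def by (simp add: sums_unique[symmetric])
qed

lemma ep_wealth_in_D:
  assumes "sgn_ok r"
  shows "ep_wealth r \<omega> = -\<infinity> \<or> ep_wealth r \<omega> = \<infinity> \<or> (\<exists>d\<in>Dw. ep_wealth r \<omega> = ereal d)"
proof -
  let ?S = "\<lambda>n. ereal (hist_wealth r (stake n \<omega>))"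
  show ?thesis
  proof (cases "\<forall>s a. r s a \<le> 0")
    case True
    have W: "ep_wealth r \<omega> = (INF n. ?S n)" by (rule ep_wealth_INF[OF True])
    show ?thesis
    proof (cases "ep_wealth r \<omega> = -\<infinity>")
      case False
      have S0: "?S 0 = 0" by simp
      have "ep_wealth r \<omega> \<le> 0" using W S0 by (metis INF_lower UNIV_I)
      with False obtain w where w: "ep_wealth r \<omega> = ereal w" by (cases "ep_wealth r \<omega>") auto
      have le: "\<And>n. hist_wealth r (stake n \<omega>) \<le> 0"
        by (simp add: hw_stake sum_nonpos True)
      have ge: "\<And>n. w \<le> hist_wealth r (stake n \<omega>)"
        using W w by (metis INF_lower UNIV_I ereal_less_eq(3))
      have "range ?S \<subseteq> ereal ` (Dw \<inter> {w..0})"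
        using le ge by (auto simp: Dw_def)
      then have fin: "finite (range ?S)" using Dw_fin[OF assms] finite_subset by blast
      have "ep_wealth r \<omega> = Min (range ?S)" using W Min_eq_Inf_ereal[OF fin] by simp
      moreover have "Min (range ?S) \<in> range ?S" using fin by (intro Min_in) auto
      ultimately show ?thesis by (auto simp: Dw_def)
    qed simp
  next
    case False
    then have True: "\<forall>s a. r s a \<ge> 0" using assms unfolding sgn_ok_def by auto
    have W: "ep_wealth r \<omega> = (SUP n. ?S n)" by (rule ep_wealth_SUP[OF True])
    show ?thesis
    proof (cases "ep_wealth r \<omega> = \<infinity>")
      case False
      have S0: "?S 0 = 0" by simp
      have "0 \<le> ep_wealth r \<omega>" using W S0 by (metis SUP_upper UNIV_I)
      with False obtain w where w: "ep_wealth r \<omega> = ereal w" by (cases "ep_wealth r \<omega>") auto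
      have le: "\<And>n. 0 \<le> hist_wealth r (stake n \<omega>)"
        by (simp add: hw_stake sum_nonneg True)
      have ge: "\<And>n. hist_wealth r (stake n \<omega>) \<le> w"
        using W w by (metis SUP_upper UNIV_I ereal_less_eq(3))
      have "range ?S \<subseteq> ereal ` (Dw \<inter> {0..w})"
        using le ge by (auto simp: Dw_def)
      then have fin: "finite (range ?S)" using Dw_fin[OF assms] finite_subset by blast
      have "ep_wealth r \<omega> = Max (range ?S)" using W Max_eq_Sup_ereal[OF fin] by simp
      moreover have "Max (range ?S) \<in> range ?S" using fin by (intro Max_in) auto
      ultimately show ?thesis by (auto simp: Dw_def)
    qed simp
  qed
qed

lemma ge_iff_neg:
  assumes "\<forall>s a. r s a \<le> 0"
  shows "ereal c \<le> ep_wealth r \<omega> \<longleftrightarrow> (\<forall>n. c \<le> hist_wealth r (stake n \<omega>))"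
  by (simp add: ep_wealth_INF[OF assms] le_INF_iff)

lemma ge_iff_pos:
  assumes "\<forall>s a. r s a \<ge> 0"
  shows "ereal c \<le> ep_wealth r \<omega> \<longleftrightarrow> (\<exists>n. c \<le> hist_wealth r (stake n \<omega>))"
proof
  assume "\<exists>n. c \<le> hist_wealth r (stake n \<omega>)"
  then show "ereal c \<le> ep_wealth r \<omega>"
    by (auto simp: ep_wealth_SUP[OF assms] intro: SUP_upper2)
next
  assume a: "ereal c \<le> ep_wealth r \<omega>"
  have ok: "sgn_ok r" using assms by (simp add: sgn_ok_def)
  have W: "ep_wealth r \<omega> = (SUP n. ereal (hist_wealth r (stake n \<omega>)))" by (rule ep_wealth_SUP[OF assms])
  consider "ep_wealth r \<omega> = -\<infinity>" | "ep_wealth r \<omega> = \<infinity>" | d where "ep_wealth r \<omega> = ereal d"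
    using ep_wealth_in_D[OF ok] by blast
  then show "\<exists>n. c \<le> hist_wealth r (stake n \<omega>)"
  proof cases
    case 1 then show ?thesis using a by simp
  next
    case 2
    then have "ereal c < (SUP n. ereal (hist_wealth r (stake n \<omega>)))" using W by simp
    then obtain n where "ereal c < ereal (hist_wealth r (stake n \<omega>))" by (auto simp: less_SUP_iff)
    then show ?thesis by (auto intro: less_imp_le)
  next
    case 3
    let ?S = "\<lambda>n. ereal (hist_wealth r (stake n \<omega>))"
    have le: "\<And>n. 0 \<le> hist_wealth r (stake n \<omega>)"
      by (simp add: hw_stake sum_nonneg assms)
    have ge: "\<And>n. hist_wealth r (stake n \<omega>) \<le> d"
      using W 3 by (metis SUP_upper UNIV_I ereal_less_eq(3))
    have "range ?S \<subseteq> ereal ` (Dw \<inter> {0..d})"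
      using le ge by (auto simp: Dw_def)
    then have fin: "finite (range ?S)" using Dw_fin[OF ok] finite_subset by blast
    have "ep_wealth r \<omega> = Max (range ?S)" using W Max_eq_Sup_ereal[OF fin] by simp
    moreover have "Max (range ?S) \<in> range ?S" using fin by (intro Max_in) auto
    ultimately obtain n where "ep_wealth r \<omega> = ?S n" by auto
    then show ?thesis using a by auto
  qed
qed

lemma ep_wealth_meas:
  assumes "sgn_ok r"
  shows "ep_wealth r \<in> borel_measurable (stream_space (count_space UNIV))"
proof -
  have m: "(\<lambda>\<omega>. ereal (hist_wealth r (stake n \<omega>))) \<in> borel_measurable (stream_space (count_space UNIV))" for n
    using measurable_compose[OF measurable_stake[of n] measurable_count_space[of "\<lambda>h. ereal (hist_wealth r h)"]]
    by simp
  show ?thesis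
  proof (cases "\<forall>s a. r s a \<le> 0")
    case True
    have "ep_wealth r = (\<lambda>\<omega>. INF n. ereal (hist_wealth r (stake n \<omega>)))"
      using ep_wealth_INF[OF True] by auto
    then show ?thesis using m by simp
  next
    case False
    then have T: "\<forall>s a. r s a \<ge> 0" using assms unfolding sgn_ok_def by auto
    have "ep_wealth r = (\<lambda>\<omega>. SUP n. ereal (hist_wealth r (stake n \<omega>)))"
      using ep_wealth_SUP[OF T] by auto
    then show ?thesis using m by simp
  qed
qed

end


definition pol :: "('s \<Rightarrow> 'a \<Rightarrow> real) \<Rightarrow> ('s \<Rightarrow> real \<Rightarrow> 'a) \<Rightarrow> real \<Rightarrow> ('s,'a) policy" where
  "pol r d w0 = (\<lambda>h s. return_pmf (d s (w0 + hist_wealth r h)))"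

lemma pol_shift: "(\<lambda>h. pol r d w ((s,a)#h)) = pol r d (w + r s a)"
  by (auto simp: pol_def add.assoc fun_eq_iff)

lemma sdwm_pol: "sdwm_policy r (pol r d 0)"
  unfolding sdwm_policy_def pol_def by auto

lemma sum_return_pmf:
  fixes f :: "'a::finite \<Rightarrow> real"
  shows "(\<Sum>a\<in>UNIV. pmf (return_pmf a0) a * f a) = f a0"
proof -
  have "(\<Sum>a\<in>UNIV. pmf (return_pmf a0) a * f a) = (\<Sum>a\<in>UNIV. if a = a0 then f a0 else 0)"
    by (intro sum.cong refl) (auto simp: pmf_return)
  then show ?thesis by simp
qed

lemma sum_pmf_1:
  fixes \<mu> :: "'a::finite pmf"
  shows "(\<Sum>a\<in>UNIV. pmf \<mu> a) = 1"
  by (rule sum_pmf_eq_1) auto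

lemma convex_le_Max:
  fixes f :: "'a::finite \<Rightarrow> real"
  shows "(\<Sum>a\<in>UNIV. pmf \<mu> a * f a) \<le> Max (range f)"
proof -
  have "(\<Sum>a\<in>UNIV. pmf \<mu> a * f a) \<le> (\<Sum>a\<in>UNIV. pmf \<mu> a * Max (range f))"
    by (intro sum_mono mult_left_mono) (auto intro: Max_ge)
  also have "\<dots> = Max (range f)" by (simp add: sum_distrib_right[symmetric] sum_pmf_1)
  finally show ?thesis .
qed

context
  fixes P :: "'s::finite \<Rightarrow> 'a::finite \<Rightarrow> 's pmf"
    and r :: "'s \<Rightarrow> 'a \<Rightarrow> real"
    and c :: real
begin

definition H :: "('s,'a) policy \<Rightarrow> 's \<Rightarrow> nat \<Rightarrow> real \<Rightarrow> real" where
  "H \<pi> s n w = tsum P (return_pmf s) \<pi> n (\<lambda>xs. c \<le> w + hist_wealth r xs)"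

lemma H_0: "H \<pi> s 0 w = (if c \<le> w then 1 else 0)"
  by (simp add: H_def tsum_0)

lemma H_Suc: "H \<pi> s (Suc n) w =
   (\<Sum>a\<in>UNIV. pmf (\<pi> [] s) a * (\<Sum>s'\<in>UNIV. pmf (P s a) s' * H (\<lambda>h. \<pi> ((s,a)#h)) s' n (w + r s a)))"
  unfolding H_def tsum_ret_Suc by (simp add: add.assoc)

lemma H_nonneg: "0 \<le> H \<pi> s n w"
  by (simp add: H_def tsum_nonneg)

lemma H_le1: "H \<pi> s n w \<le> 1"
  by (simp add: H_def tsum_le_1)

lemma H_pol_Suc: "H (pol r d w) s (Suc n) w =
   (\<Sum>s'\<in>UNIV. pmf (P s (d s w)) s' * H (pol r d (w + r s (d s w))) s' n (w + r s (d s w)))"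
  unfolding H_Suc pol_shift by (simp add: pol_def sum_return_pmf)

lemma H_measure: "H \<pi> s n w = measure (path_measure P s \<pi>) {\<omega>. c \<le> w + hist_wealth r (stake n \<omega>)}"
  unfolding H_def by (rule measure_stake[symmetric])

lemma H_False:
  assumes "\<And>xs. \<not> (c \<le> w + hist_wealth r xs)"
  shows "H \<pi> s n w = 0"
  unfolding H_def tsum_def using assms by simp

lemma H_True:
  assumes "\<And>xs. c \<le> w + hist_wealth r xs"
  shows "H \<pi> s n w = 1"
  unfolding H_def using assms tsum_True by simp

definition pr :: "('s,'a) policy \<Rightarrow> 's \<Rightarrow> real" where
  "pr \<pi> s = measure (path_measure P s \<pi>) {\<omega>\<in>space (path_measure P s \<pi>). ereal c \<le> ep_wealth r \<omega>}"

lemma pr_neg: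
  assumes "\<forall>s a. r s a \<le> 0"
  shows "(\<lambda>n. H \<pi> s n 0) \<longlonglongrightarrow> pr \<pi> s" and "\<And>n. pr \<pi> s \<le> H \<pi> s n 0"
proof -
  let ?M = "path_measure P s \<pi>"
  interpret prob_space ?M by (rule path_measure_props(2))
  let ?E = "\<lambda>n. {\<omega>. c \<le> hist_wealth r (stake n \<omega>)}"
  have ev: "range ?E \<subseteq> events" using sets_pm[of "\<lambda>xs. c \<le> hist_wealth r xs"] by auto
  have dec: "decseq ?E"
    by (rule decseq_SucI) (auto simp del: stake.simps simp: stake_Suc assms intro: order_trans)
  have eq: "{\<omega>\<in>space ?M. ereal c \<le> ep_wealth r \<omega>} = (\<Inter>n. ?E n)"
    by (auto simp: space_pm ge_iff_neg[OF assms])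
  have H: "H \<pi> s n 0 = measure ?M (?E n)" for n by (simp add: H_measure)
  show "(\<lambda>n. H \<pi> s n 0) \<longlonglongrightarrow> pr \<pi> s"
    unfolding H pr_def eq by (rule finite_Lim_measure_decseq[OF ev dec])
  show "pr \<pi> s \<le> H \<pi> s n 0" for n
    unfolding H pr_def eq using ev by (intro finite_measure_mono) auto
qed

lemma pr_pos:
  assumes "\<forall>s a. r s a \<ge> 0"
  shows "(\<lambda>n. H \<pi> s n 0) \<longlonglongrightarrow> pr \<pi> s"
proof -
  let ?M = "path_measure P s \<pi>"
  interpret prob_space ?M by (rule path_measure_props(2))
  let ?E = "\<lambda>n. {\<omega>. c \<le> hist_wealth r (stake n \<omega>)}"
  have ev: "range ?E \<subseteq> events" using sets_pm[of "\<lambda>xs. c \<le> hist_wealth r xs"] by auto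
  have inc: "incseq ?E"
    by (rule incseq_SucI) (auto simp del: stake.simps simp: stake_Suc assms intro: order_trans)
  have eq: "{\<omega>\<in>space ?M. ereal c \<le> ep_wealth r \<omega>} = (\<Union>n. ?E n)"
    by (auto simp: space_pm ge_iff_pos[OF assms])
  have H: "H \<pi> s n 0 = measure ?M (?E n)" for n by (simp add: H_measure)
  show "(\<lambda>n. H \<pi> s n 0) \<longlonglongrightarrow> pr \<pi> s"
    unfolding H pr_def eq by (rule finite_Lim_measure_incseq[OF ev inc])
qed

lemma H_mono_pos:
  assumes "\<forall>s a. r s a \<ge> 0"
  shows "H \<pi> s n w \<le> H \<pi> s (Suc n) w"
proof -
  let ?M = "path_measure P s \<pi>"
  interpret prob_space ?M by (rule path_measure_props(2))
  have "{\<omega>. c \<le> w + hist_wealth r (stake (Suc n) \<omega>)} \<in> events"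
    by (rule sets_pm)
  then show ?thesis unfolding H_measure
    by (intro finite_measure_mono)
       (auto simp del: stake.simps simp: stake_Suc assms intro: order_trans)
qed

end


definition Qv :: "('s::finite \<Rightarrow> 'a \<Rightarrow> 's pmf) \<Rightarrow> ('s \<Rightarrow> 'a \<Rightarrow> real) \<Rightarrow> ('s \<Rightarrow> real \<Rightarrow> real) \<Rightarrow> 's \<Rightarrow> real \<Rightarrow> 'a \<Rightarrow> real" where
  "Qv P r f s w a = (\<Sum>s'\<in>UNIV. pmf (P s a) s' * f s' (w + r s a))"

lemma Qv_mono:
  assumes "\<And>s w. f s w \<le> g s w"
  shows "Qv P r f s w a \<le> Qv P r g s w a"
  unfolding Qv_def using assms by (intro sum_mono mult_left_mono) auto

lemma Qv_bounds:
  assumes "\<And>s w. 0 \<le> f s w" "\<And>s w. f s w \<le> 1"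
  shows "0 \<le> Qv P r f s w a" "Qv P r f s w a \<le> 1"
proof -
  show "0 \<le> Qv P r f s w a" unfolding Qv_def using assms by (intro sum_nonneg) auto
  have "Qv P r f s w a \<le> Qv P r (\<lambda>_ _. 1) s w a" by (rule Qv_mono) (use assms in auto)
  also have "\<dots> = 1" by (simp add: Qv_def sum_pmf_1)
  finally show "Qv P r f s w a \<le> 1" .
qed

lemma Qv_tendsto:
  assumes "\<And>s w. (\<lambda>n. F n s w) \<longlonglongrightarrow> f s w"
  shows "(\<lambda>n. Qv P r (F n) s w a) \<longlonglongrightarrow> Qv P r f s w a"
  unfolding Qv_def by (intro tendsto_sum tendsto_mult_left assms)

lemma H_convex_le:
  fixes P :: "'s::finite \<Rightarrow> 'a::finite \<Rightarrow> 's pmf"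
  assumes "\<And>a s' \<pi>'. H P r c \<pi>' s' n (w + r s a) \<le> f s' (w + r s a)"
  shows "H P r c \<pi> s (Suc n) w \<le> Max (range (Qv P r f s w))"
proof -
  have "H P r c \<pi> s (Suc n) w \<le> (\<Sum>a\<in>UNIV. pmf (\<pi> [] s) a * Qv P r f s w a)"
    unfolding H_Suc Qv_def using assms
    by (intro sum_mono mult_left_mono) auto
  also have "\<dots> \<le> Max (range (Qv P r f s w))" by (rule convex_le_Max)
  finally show ?thesis .
qed

fun Vsafe :: "('s::finite \<Rightarrow> 'a::finite \<Rightarrow> 's pmf) \<Rightarrow> ('s \<Rightarrow> 'a \<Rightarrow> real) \<Rightarrow> real \<Rightarrow> nat \<Rightarrow> 's \<Rightarrow> real \<Rightarrow> real" where
  "Vsafe P r c 0 s w = (if c \<le> w then 1 else 0)"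
| "Vsafe P r c (Suc n) s w = (if c \<le> w then Max (range (Qv P r (Vsafe P r c n) s w)) else 0)"

context
  fixes P :: "'s::finite \<Rightarrow> 'a::finite \<Rightarrow> 's pmf"
    and r :: "'s \<Rightarrow> 'a \<Rightarrow> real"
    and c :: real
  assumes neg: "\<forall>s a. r s a \<le> 0"
begin

abbreviation V where "V \<equiv> Vsafe P r c"

lemma hw_nonpos: "hist_wealth r xs \<le> 0"
  by (induction xs) (auto simp: neg add_nonpos_nonpos)

lemma V_bounds: "0 \<le> V n s w \<and> V n s w \<le> 1"
proof (induction n arbitrary: s w)
  case (Suc n)
  have h1: "\<And>s w. 0 \<le> V n s w" "\<And>s w. V n s w \<le> 1" using Suc by auto
  have b: "\<And>a. 0 \<le> Qv P r (V n) s w a \<and> Qv P r (V n) s w a \<le> 1"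
    by (intro conjI Qv_bounds) (use h1 in auto)
  have fin: "finite (range (Qv P r (V n) s w))" by simp
  have "Qv P r (V n) s w undefined \<le> Max (range (Qv P r (V n) s w))"
    by (rule Max_ge[OF fin]) simp
  then have "0 \<le> Max (range (Qv P r (V n) s w))"
    using b[of undefined] by linarith
  moreover have "Max (range (Qv P r (V n) s w)) \<le> 1"
    using b by (intro Max.boundedI[OF fin]) auto
  ultimately show ?case by simp
qed simp

lemma V_dec: "V (Suc n) s w \<le> V n s w"
proof (induction n arbitrary: s w)
  case 0
  have h1: "\<And>s w. 0 \<le> V 0 s w" "\<And>s w. V 0 s w \<le> 1" using V_bounds by auto
  have "\<And>a. Qv P r (V 0) s w a \<le> 1" by (intro Qv_bounds) (use h1 in auto)
  then have "Max (range (Qv P r (V 0) s w)) \<le> 1"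
    by (intro Max.boundedI) auto
  then show ?case by simp
next
  case (Suc n)
  have "\<And>a. Qv P r (V (Suc n)) s w a \<le> Qv P r (V n) s w a"
    by (rule Qv_mono) (rule Suc)
  then have "Max (range (Qv P r (V (Suc n)) s w)) \<le> Max (range (Qv P r (V n) s w))"
  proof (intro Max.boundedI)
    fix x assume "x \<in> range (Qv P r (V (Suc n)) s w)"
    then obtain a where "x = Qv P r (V (Suc n)) s w a" by auto
    moreover have "Qv P r (V n) s w a \<le> Max (range (Qv P r (V n) s w))" by (rule Max_ge) auto
    ultimately show "x \<le> Max (range (Qv P r (V n) s w))"
      using \<open>\<And>a. Qv P r (V (Suc n)) s w a \<le> Qv P r (V n) s w a\<close> by (meson order_trans)
  qed auto
  then show ?case by simp
qed

lemma H_le_V: "H P r c \<pi> s n w \<le> V n s w"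
proof (induction n arbitrary: \<pi> s w)
  case 0
  then show ?case by (simp add: H_0)
next
  case (Suc n)
  show ?case
  proof (cases "c \<le> w")
    case True
    have "H P r c \<pi> s (Suc n) w \<le> Max (range (Qv P r (V n) s w))"
      by (rule H_convex_le) (rule Suc)
    then show ?thesis using True by simp
  next
    case False
    have "H P r c \<pi> s (Suc n) w = 0"
    proof (rule H_False)
      fix xs show "\<not> c \<le> w + hist_wealth r xs" using False hw_nonpos[of xs] by linarith
    qed
    then show ?thesis using False by simp
  qed
qed

definition Vs :: "'s \<Rightarrow> real \<Rightarrow> real" where "Vs s w = (INF n. V n s w)"

lemma bdd: "bdd_below (range (\<lambda>n. V n s w))"
  using V_bounds by (intro bdd_belowI[of _ 0]) auto

lemma Vs_le: "Vs s w \<le> V n s w"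
  unfolding Vs_def by (rule cINF_lower[OF bdd]) simp

lemma Vs_ge: "(\<And>n. x \<le> V n s w) \<Longrightarrow> x \<le> Vs s w"
  unfolding Vs_def by (rule cINF_greatest) auto

lemma Vs_lim: "(\<lambda>n. V n s w) \<longlonglongrightarrow> Vs s w"
  unfolding Vs_def by (rule LIMSEQ_decseq_INF[OF bdd]) (rule decseq_SucI, rule V_dec)

lemma Vs_nonneg: "0 \<le> Vs s w"
  using V_bounds by (intro Vs_ge) auto

lemma greedy: "\<exists>a. Vs s w \<le> Qv P r Vs s w a"
proof (cases "c \<le> w")
  case False
  then have "Vs s w \<le> 0" using Vs_le[of s w 1] by simp
  moreover have "0 \<le> Qv P r Vs s w a" for a
    unfolding Qv_def using Vs_nonneg by (intro sum_nonneg) auto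
  ultimately show ?thesis by (meson order_trans)
next
  case True
  show ?thesis
  proof (rule ccontr)
    assume "\<not> ?thesis"
    then have lt: "\<And>a. Qv P r Vs s w a < Vs s w" by (simp add: not_le)
    have ev: "\<forall>\<^sub>F n in sequentially. Qv P r (V n) s w a < Vs s w" for a
      by (rule order_tendstoD(2)[OF Qv_tendsto[OF Vs_lim] lt])
    have "\<forall>\<^sub>F n in sequentially. \<forall>a. Qv P r (V n) s w a < Vs s w"
      by (rule eventually_all_finite) (rule ev)
    then obtain n where n: "\<forall>a. Qv P r (V n) s w a < Vs s w"
      unfolding eventually_sequentially by blast
    have "Vs s w \<le> V (Suc n) s w" by (rule Vs_le)
    also have "\<dots> = Max (range (Qv P r (V n) s w))" using True by simp
    also have "\<dots> < Vs s w"
    proof -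
      have "Max (range (Qv P r (V n) s w)) \<in> range (Qv P r (V n) s w)" by (rule Max_in) auto
      then show ?thesis using n by auto
    qed
    finally show False by simp
  qed
qed

definition dg :: "'s \<Rightarrow> real \<Rightarrow> 'a" where
  "dg s w = (SOME a. Vs s w \<le> Qv P r Vs s w a)"

lemma dg: "Vs s w \<le> Qv P r Vs s w (dg s w)"
  unfolding dg_def using greedy by (rule someI_ex)

lemma u_ge: "Vs s w \<le> H P r c (pol r dg w) s n w"
proof (induction n arbitrary: s w)
  case 0
  show ?case using Vs_le[of s w 0] by (simp add: H_0)
next
  case (Suc n)
  have "Vs s w \<le> Qv P r Vs s w (dg s w)" by (rule dg)
  also have "\<dots> \<le> H P r c (pol r dg w) s (Suc n) w"
    unfolding H_pol_Suc Qv_def using Suc by (intro sum_mono mult_left_mono) auto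
  finally show ?case .
qed

theorem safety_opt: "sdwm_policy r (pol r dg 0) \<and> (\<forall>\<pi>. pr P r c \<pi> s0 \<le> pr P r c (pol r dg 0) s0)"
proof (intro conjI allI)
  show "sdwm_policy r (pol r dg 0)" by (rule sdwm_pol)
  fix \<pi>
  have "pr P r c \<pi> s0 \<le> Vs s0 0"
    by (rule Vs_ge) (meson H_le_V pr_neg(2)[OF neg] order_trans)
  also have "Vs s0 0 \<le> pr P r c (pol r dg 0) s0"
    by (rule LIMSEQ_le_const[OF pr_neg(1)[OF neg]]) (use u_ge in auto)
  finally show "pr P r c \<pi> s0 \<le> pr P r c (pol r dg 0) s0" .
qed

end


fun Vreach :: "('s::finite \<Rightarrow> 'a::finite \<Rightarrow> 's pmf) \<Rightarrow> ('s \<Rightarrow> 'a \<Rightarrow> real) \<Rightarrow> real \<Rightarrow> nat \<Rightarrow> 's \<Rightarrow> real \<Rightarrow> real" where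
  "Vreach P r c 0 s w = (if c \<le> w then 1 else 0)"
| "Vreach P r c (Suc n) s w = (if c \<le> w then 1 else Max (range (Qv P r (Vreach P r c n) s w)))"

definition VsR :: "('s::finite \<Rightarrow> 'a::finite \<Rightarrow> 's pmf) \<Rightarrow> ('s \<Rightarrow> 'a \<Rightarrow> real) \<Rightarrow> real \<Rightarrow> 's \<Rightarrow> real \<Rightarrow> real" where
  "VsR P r c s w = (SUP n. Vreach P r c n s w)"

primrec Rk :: "('s::finite \<Rightarrow> 'a::finite \<Rightarrow> 's pmf) \<Rightarrow> ('s \<Rightarrow> 'a \<Rightarrow> real) \<Rightarrow> real \<Rightarrow> nat \<Rightarrow> ('s \<times> real) set" where
  "Rk P r c 0 = {(s,w). c \<le> w}"
| "Rk P r c (Suc n) = Rk P r c n \<union> {(s,w). \<exists>a. VsR P r c s w \<le> Qv P r (VsR P r c) s w a \<and>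
      (\<exists>s'. 0 < pmf (P s a) s' \<and> (s', w + r s a) \<in> Rk P r c n)}"

context
  fixes P :: "'s::finite \<Rightarrow> 'a::finite \<Rightarrow> 's pmf"
    and r :: "'s \<Rightarrow> 'a \<Rightarrow> real"
    and c :: real
  assumes pos: "\<forall>s a. r s a \<ge> 0"
begin

abbreviation Vq where "Vq \<equiv> Vreach P r c"
abbreviation Vsq where "Vsq \<equiv> VsR P r c"
abbreviation Rq where "Rq \<equiv> Rk P r c"

lemma hw_nonneg: "0 \<le> hist_wealth r xs"
  by (induction xs) (auto simp: pos)

lemma Vq_bounds: "0 \<le> Vq n s w \<and> Vq n s w \<le> 1"
proof (induction n arbitrary: s w)
  case (Suc n)
  have h1: "\<And>s w. 0 \<le> Vq n s w" "\<And>s w. Vq n s w \<le> 1" using Suc by auto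
  have b: "\<And>a. 0 \<le> Qv P r (Vq n) s w a \<and> Qv P r (Vq n) s w a \<le> 1"
    by (intro conjI Qv_bounds) (use h1 in auto)
  have fin: "finite (range (Qv P r (Vq n) s w))" by simp
  have "Qv P r (Vq n) s w undefined \<le> Max (range (Qv P r (Vq n) s w))"
    by (rule Max_ge[OF fin]) simp
  then have "0 \<le> Max (range (Qv P r (Vq n) s w))"
    using b[of undefined] by linarith
  moreover have "Max (range (Qv P r (Vq n) s w)) \<le> 1"
    using b by (intro Max.boundedI[OF fin]) auto
  ultimately show ?case by simp
qed simp

lemma Vq_inc: "Vq n s w \<le> Vq (Suc n) s w"
proof (induction n arbitrary: s w)
  case 0
  have h1: "\<And>s w. 0 \<le> Vq 0 s w" "\<And>s w. Vq 0 s w \<le> 1" using Vq_bounds by auto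
  have "0 \<le> Qv P r (Vq 0) s w undefined" by (intro Qv_bounds) (use h1 in auto)
  also have "\<dots> \<le> Max (range (Qv P r (Vq 0) s w))" by (rule Max_ge) auto
  finally show ?case by simp
next
  case (Suc n)
  have m: "\<And>a. Qv P r (Vq n) s w a \<le> Qv P r (Vq (Suc n)) s w a"
    by (rule Qv_mono) (rule Suc)
  have "Max (range (Qv P r (Vq n) s w)) \<le> Max (range (Qv P r (Vq (Suc n)) s w))"
  proof (intro Max.boundedI)
    fix x assume "x \<in> range (Qv P r (Vq n) s w)"
    then obtain a where "x = Qv P r (Vq n) s w a" by auto
    moreover have "Qv P r (Vq (Suc n)) s w a \<le> Max (range (Qv P r (Vq (Suc n)) s w))" by (rule Max_ge) auto
    ultimately show "x \<le> Max (range (Qv P r (Vq (Suc n)) s w))"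
      using m by (meson order_trans)
  qed auto
  then show ?case by simp
qed

lemma H_le_Vq: "H P r c \<pi> s n w \<le> Vq n s w"
proof (induction n arbitrary: \<pi> s w)
  case 0
  then show ?case by (simp add: H_0)
next
  case (Suc n)
  show ?case
  proof (cases "c \<le> w")
    case True
    then show ?thesis using H_le1 by simp
  next
    case False
    have "H P r c \<pi> s (Suc n) w \<le> Max (range (Qv P r (Vq n) s w))"
      by (rule H_convex_le) (rule Suc)
    then show ?thesis using False by simp
  qed
qed

lemma bddq: "bdd_above (range (\<lambda>n. Vq n s w))"
  using Vq_bounds by (intro bdd_aboveI[of _ 1]) auto

lemma Vsq_ge: "Vq n s w \<le> Vsq s w"
  unfolding VsR_def by (rule cSUP_upper[OF _ bddq]) simp

lemma Vsq_le: "(\<And>n. Vq n s w \<le> x) \<Longrightarrow> Vsq s w \<le> x"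
  unfolding VsR_def by (rule cSUP_least) auto

lemma Vsq_lim: "(\<lambda>n. Vq n s w) \<longlonglongrightarrow> Vsq s w"
  unfolding VsR_def by (rule LIMSEQ_incseq_SUP[OF bddq]) (rule incseq_SucI, rule Vq_inc)

lemma Vsq_nonneg: "0 \<le> Vsq s w"
  using Vsq_ge[of 0 s w] Vq_bounds[of 0 s w] by linarith

lemma Vsq_le1: "Vsq s w \<le> 1"
  using Vq_bounds by (intro Vsq_le) auto

lemma Vsq_target: "c \<le> w \<Longrightarrow> Vsq s w = 1"
  using Vsq_ge[of 0 s w] Vsq_le1[of s w] by simp

lemma F2: "w < c \<Longrightarrow> Qv P r Vsq s w a \<le> Vsq s w"
proof -
  assume w: "w < c"
  have "Qv P r (Vq n) s w a \<le> Vsq s w" for n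
  proof -
    have "Qv P r (Vq n) s w a \<le> Max (range (Qv P r (Vq n) s w))" by (rule Max_ge) auto
    also have "\<dots> = Vq (Suc n) s w" using w by simp
    also have "\<dots> \<le> Vsq s w" by (rule Vsq_ge)
    finally show ?thesis .
  qed
  then show ?thesis by (intro LIMSEQ_le_const2[OF Qv_tendsto[OF Vsq_lim]]) auto
qed

lemma F3: "\<exists>a. Vsq s w \<le> Qv P r Vsq s w a"
proof (cases "c \<le> w")
  case True
  have "Qv P r Vsq s w undefined = 1"
    unfolding Qv_def using True pos by (simp add: Vsq_target sum_pmf_1 add_increasing2)
  then show ?thesis using Vsq_le1 by metis
next
  case False
  have fin: "finite (range (Qv P r Vsq s w))" by simp
  have "Vsq s w \<le> Max (range (Qv P r Vsq s w))"
  proof (rule Vsq_le)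
    fix n
    show "Vq n s w \<le> Max (range (Qv P r Vsq s w))"
    proof (cases n)
      case 0
      then show ?thesis using False
        by (simp add: Qv_bounds(1)[OF Vsq_nonneg Vsq_le1] Max_ge_iff)
    next
      case (Suc k)
      have "Max (range (Qv P r (Vq k) s w)) \<le> Max (range (Qv P r Vsq s w))"
      proof (intro Max.boundedI)
        fix x assume "x \<in> range (Qv P r (Vq k) s w)"
        then obtain a where "x = Qv P r (Vq k) s w a" by auto
        moreover have "Qv P r (Vq k) s w a \<le> Qv P r Vsq s w a" by (rule Qv_mono) (rule Vsq_ge)
        moreover have "Qv P r Vsq s w a \<le> Max (range (Qv P r Vsq s w))" by (rule Max_ge) auto
        ultimately show "x \<le> Max (range (Qv P r Vsq s w))" by linarith
      qed auto
      then show ?thesis using Suc False by simp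
    qed
  qed
  moreover have mx: "Max (range (Qv P r Vsq s w)) \<in> range (Qv P r Vsq s w)" by (rule Max_in) auto
  from mx obtain a where "Max (range (Qv P r Vsq s w)) = Qv P r Vsq s w a" by (metis rangeE)
  ultimately show ?thesis by auto
qed

lemma lfp:
  assumes f0: "\<And>s w. 0 \<le> f s w"
    and f1: "\<And>s w. c \<le> w \<Longrightarrow> 1 \<le> f s w"
    and f2: "\<And>s w a. w < c \<Longrightarrow> Qv P r f s w a \<le> f s w"
  shows "Vsq s w \<le> f s w"
proof -
  have "Vq n s w \<le> f s w" for n
  proof (induction n arbitrary: s w)
    case 0 then show ?case using f0 f1 by simp
  next
    case (Suc n)
    show ?case
    proof (cases "c \<le> w")
      case True then show ?thesis using f1 by simp
    next
      case False
      have "Max (range (Qv P r (Vq n) s w)) \<le> f s w"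
      proof (intro Max.boundedI)
        fix x assume "x \<in> range (Qv P r (Vq n) s w)"
        then obtain a where "x = Qv P r (Vq n) s w a" by auto
        moreover have "Qv P r (Vq n) s w a \<le> Qv P r f s w a" by (rule Qv_mono) (rule Suc)
        moreover have "Qv P r f s w a \<le> f s w" using f2 False by simp
        ultimately show "x \<le> f s w" by linarith
      qed auto
      then show ?thesis using False by simp
    qed
  qed
  then show ?thesis by (rule Vsq_le)
qed

definition X :: "('s \<times> real) set" where "X = UNIV \<times> (Dw r \<inter> {w. 0 \<le> w \<and> w < c})"

lemma X_fin: "finite X"
proof -
  have ok: "sgn_ok r" using pos by (simp add: sgn_ok_def)
  have "Dw r \<inter> {w. 0 \<le> w \<and> w < c} \<subseteq> Dw r \<inter> {0..c}" by auto
  then have "finite (Dw r \<inter> {w. 0 \<le> w \<and> w < c})" using Dw_fin[OF ok] finite_subset by blast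
  then show ?thesis unfolding X_def by simp
qed

lemma X_succ:
  assumes "(s,w) \<in> X" "\<not> c \<le> w + r s a"
  shows "(s', w + r s a) \<in> X"
proof -
  from assms(1) obtain h where h: "w = hist_wealth r h" "0 \<le> w" unfolding X_def Dw_def by auto
  then have "w + r s a = hist_wealth r (h @ [(s,a)])" by simp
  then have D: "w + r s a \<in> Dw r" unfolding Dw_def by (metis rangeI)
  have "0 \<le> w + r s a" using pos h by (simp add: add_nonneg_nonneg)
  then show ?thesis using assms(2) D unfolding X_def by auto
qed

lemma X_lt: "(s,w) \<in> X \<Longrightarrow> w < c"
  unfolding X_def by auto

lemma R_SucI: "Vsq s w \<le> Qv P r Vsq s w a \<Longrightarrow> 0 < pmf (P s a) s' \<Longrightarrow> (s', w + r s a) \<in> Rq n \<Longrightarrow> (s,w) \<in> Rq (Suc n)"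
  by auto

lemma sum_zero_terms:
  fixes g :: "'s \<Rightarrow> real"
  assumes "\<And>s'. 0 \<le> g s'" "(\<Sum>s'\<in>UNIV. g s') \<le> 0"
  shows "g s' = 0"
proof -
  have "0 \<le> (\<Sum>s'\<in>UNIV. g s')" by (rule sum_nonneg) (use assms in auto)
  then have "(\<Sum>s'\<in>UNIV. g s') = 0" using assms by linarith
  then show ?thesis using assms(1) sum_nonneg_eq_0_iff[of UNIV g] by auto
qed

lemma ranked:
  assumes x0: "(s0, w0) \<in> X" "0 < Vsq s0 w0"
  shows "\<exists>n. (s0, w0) \<in> Rq n"
proof (rule ccontr)
  assume nr: "\<not> ?thesis"
  define Z where "Z = {(s,w) \<in> X. 0 < Vsq s w \<and> (\<forall>n. (s,w) \<notin> Rq n)}"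
  have Zfin: "finite Z" using X_fin unfolding Z_def by (rule finite_subset[rotated]) auto
  have x0Z: "(s0,w0) \<in> Z" using x0 nr unfolding Z_def by auto
  define m where "m = Max ((\<lambda>(s,w). Vsq s w) ` Z)"
  have mge: "\<And>s w. (s,w) \<in> Z \<Longrightarrow> Vsq s w \<le> m"
    unfolding m_def using Zfin by (auto intro!: Max_ge)
  have mpos: "0 < m" using mge[OF x0Z] x0(2) by linarith
  define Y where "Y = {(s,w) \<in> Z. Vsq s w = m}"
  have "m \<in> (\<lambda>(s,w). Vsq s w) ` Z" unfolding m_def using Zfin x0Z by (intro Max_in) auto
  then obtain s1 w1 where y1: "(s1,w1) \<in> Y" unfolding Y_def by auto
  have YX: "(s,w) \<in> Y \<Longrightarrow> (s,w) \<in> X" for s w unfolding Y_def Z_def by auto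
  have Yval: "(s,w) \<in> Y \<Longrightarrow> Vsq s w = m" for s w unfolding Y_def by auto
  have closed: "(s', w + r s a) \<in> Y"
    if xY: "(s,w) \<in> Y" and A: "Vsq s w \<le> Qv P r Vsq s w a" and pp: "0 < pmf (P s a) s'" for s w a s'
  proof -
    have xZ: "(s,w) \<in> Z" using xY unfolding Y_def by auto
    have nz: "\<forall>n. (s,w) \<notin> Rq n" using xZ unfolding Z_def by auto
    have succ_le: "Vsq s'' (w + r s a) \<le> m" if "0 < pmf (P s a) s''" for s''
    proof (cases "Vsq s'' (w + r s a) = 0")
      case True then show ?thesis using mpos by simp
    next
      case False
      then have pos'': "0 < Vsq s'' (w + r s a)" using Vsq_nonneg[of s'' "w + r s a"] by linarith
      have notR: "\<forall>n. (s'', w + r s a) \<notin> Rq n"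
      proof (intro allI notI)
        fix n assume "(s'', w + r s a) \<in> Rq n"
        then have "(s,w) \<in> Rq (Suc n)" using A that by (intro R_SucI)
        then show False using nz by blast
      qed
      have "\<not> c \<le> w + r s a" using notR[rule_format, of 0] by auto
      then have "(s'', w + r s a) \<in> X" using X_succ YX[OF xY] by blast
      then have "(s'', w + r s a) \<in> Z" using pos'' notR unfolding Z_def by auto
      then show ?thesis by (rule mge)
    qed
    let ?g = "\<lambda>s''. pmf (P s a) s'' * (m - Vsq s'' (w + r s a))"
    have g0: "0 \<le> ?g s''" for s''
    proof (cases "0 < pmf (P s a) s''")
      case True then show ?thesis using succ_le[OF True] by simp
    next
      case False then have "pmf (P s a) s'' = 0" using pmf_nonneg[of "P s a" s''] by linarith
      then show ?thesis by simp
    qed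
    have "(\<Sum>s''\<in>UNIV. ?g s'') = m - Qv P r Vsq s w a"
      unfolding Qv_def by (simp add: algebra_simps sum_subtractf sum_distrib_left[symmetric] sum_pmf_1)
    also have "\<dots> \<le> 0" using A Yval[OF xY] by simp
    finally have "?g s' = 0" using sum_zero_terms[of ?g] g0 by blast
    then have "Vsq s' (w + r s a) = m" using pp by simp
    moreover have "0 < Vsq s' (w + r s a)" using calculation mpos by simp
    moreover have "(s', w + r s a) \<in> Z"
    proof -
      have notR: "\<forall>n. (s', w + r s a) \<notin> Rq n"
      proof (intro allI notI)
        fix n assume "(s', w + r s a) \<in> Rq n"
        then have "(s,w) \<in> Rq (Suc n)" using A pp by (intro R_SucI)
        then show False using nz by blast
      qed
      have "\<not> c \<le> w + r s a" using notR[rule_format, of 0] by auto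
      then have "(s', w + r s a) \<in> X" using X_succ YX[OF xY] by blast
      then show ?thesis using calculation notR unfolding Z_def by auto
    qed
    ultimately show ?thesis unfolding Y_def by auto
  qed
  define E where "E = (\<lambda>((s,w),a). m - Qv P r Vsq s w a) ` {((s,w),a). (s,w) \<in> Y \<and> \<not> Vsq s w \<le> Qv P r Vsq s w a}"
  have Efin: "finite E"
  proof -
    have "finite Y" using Zfin unfolding Y_def by (rule finite_subset[rotated]) auto
    then have "finite (Y \<times> (UNIV :: 'a set))" by simp
    then have "finite {((s,w),a). (s,w) \<in> Y \<and> \<not> Vsq s w \<le> Qv P r Vsq s w a}"
      by (rule finite_subset[rotated]) auto
    then show ?thesis unfolding E_def by simp
  qed
  define \<epsilon> where "\<epsilon> = Min (insert m E)"
  have \<epsilon>_le_m: "\<epsilon> \<le> m" unfolding \<epsilon>_def using Efin by simp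
  have \<epsilon>_le_E: "\<epsilon> \<le> m - Qv P r Vsq s w a" if "(s,w) \<in> Y" "\<not> Vsq s w \<le> Qv P r Vsq s w a" for s w a
    unfolding \<epsilon>_def using Efin that by (intro Min_le) (auto simp: E_def image_iff intro!: bexI[of _ "((s,w),a)"])
  have \<epsilon>pos: "0 < \<epsilon>"
    unfolding \<epsilon>_def using Efin mpos by (subst Min_gr_iff) (auto simp: E_def Y_def)
  define f where "f = (\<lambda>s w. Vsq s w - (if (s,w) \<in> Y then \<epsilon> else 0))"
  have fle: "f s w \<le> Vsq s w" for s w unfolding f_def using \<epsilon>pos by simp
  have "Vsq s1 w1 \<le> f s1 w1"
  proof (rule lfp)
    fix s w
    show "0 \<le> f s w" unfolding f_def using Vsq_nonneg[of s w] \<epsilon>_le_m Yval by auto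
  next
    fix s w assume "c \<le> w"
    then have "(s,w) \<notin> Y" using X_lt YX by fastforce
    then show "1 \<le> f s w" unfolding f_def using Vsq_target \<open>c \<le> w\<close> by simp
  next
    fix s w a assume wc: "w < c"
    have q1: "Qv P r f s w a \<le> Qv P r Vsq s w a" by (rule Qv_mono) (rule fle)
    show "Qv P r f s w a \<le> f s w"
    proof (cases "(s,w) \<in> Y")
      case False
      then show ?thesis using q1 F2[OF wc, of s a] unfolding f_def by simp
    next
      case True
      show ?thesis
      proof (cases "Vsq s w \<le> Qv P r Vsq s w a")
        case A: True
        have trm: "pmf (P s a) s' * f s' (w + r s a) = pmf (P s a) s' * Vsq s' (w + r s a) - pmf (P s a) s' * \<epsilon>" for s'
        proof (cases "0 < pmf (P s a) s'")
          case True
          then have "(s', w + r s a) \<in> Y" using closed[OF \<open>(s,w) \<in> Y\<close> A] by blast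
          then show ?thesis unfolding f_def by (simp add: algebra_simps)
        next
          case False
          then have "pmf (P s a) s' = 0" using pmf_nonneg[of "P s a" s'] by linarith
          then show ?thesis by simp
        qed
        have "Qv P r f s w a = Qv P r Vsq s w a - \<epsilon>"
          unfolding Qv_def trm by (simp add: sum_subtractf sum_distrib_right[symmetric] sum_pmf_1)
        also have "\<dots> \<le> Vsq s w - \<epsilon>" using F2[OF wc, of s a] by simp
        finally show ?thesis unfolding f_def using True by simp
      next
        case False
        then show ?thesis using q1 \<epsilon>_le_E[OF True False] Yval[OF True] unfolding f_def using True by simp
      qed
    qed
  qed
  then show False using y1 \<epsilon>pos unfolding f_def by simp
qed

definition rank :: "'s \<times> real \<Rightarrow> nat" where "rank x = (LEAST n. x \<in> Rq n)"

definition dr :: "'s \<Rightarrow> real \<Rightarrow> 'a" where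
  "dr s w = (if (\<exists>n. (s,w) \<in> Rq n) \<and> w < c then
     (SOME a. Vsq s w \<le> Qv P r Vsq s w a \<and> (\<exists>s'. 0 < pmf (P s a) s' \<and> (s', w + r s a) \<in> Rq (rank (s,w) - 1)))
    else (SOME a. Vsq s w \<le> Qv P r Vsq s w a))"

lemma dr_R:
  assumes "(s,w) \<in> Rq n" "w < c"
  shows "Vsq s w \<le> Qv P r Vsq s w (dr s w) \<and> (\<exists>s'. 0 < pmf (P s (dr s w)) s' \<and> (s', w + r s (dr s w)) \<in> Rq (rank (s,w) - 1))
         \<and> 0 < rank (s,w)"
proof -
  let ?k = "rank (s,w)"
  have in_k: "(s,w) \<in> Rq ?k" unfolding rank_def using assms(1) by (rule LeastI)
  have k0: "?k \<noteq> 0" using in_k assms(2) by (intro notI) auto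
  then obtain j where j: "?k = Suc j" by (cases ?k) auto
  have "(s,w) \<notin> Rq j" unfolding rank_def
    using not_less_Least[of j "\<lambda>n. (s,w) \<in> Rq n"] j[unfolded rank_def] by auto
  then have ex: "\<exists>a. Vsq s w \<le> Qv P r Vsq s w a \<and> (\<exists>s'. 0 < pmf (P s a) s' \<and> (s', w + r s a) \<in> Rq (?k - 1))"
    using in_k j by auto
  have "dr s w = (SOME a. Vsq s w \<le> Qv P r Vsq s w a \<and> (\<exists>s'. 0 < pmf (P s a) s' \<and> (s', w + r s a) \<in> Rq (?k - 1)))"
    unfolding dr_def using assms by auto
  then show ?thesis using someI_ex[OF ex] k0 by auto
qed

lemma dr_A: "Vsq s w \<le> Qv P r Vsq s w (dr s w)"
proof (cases "(\<exists>n. (s,w) \<in> Rq n) \<and> w < c")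
  case True
  then show ?thesis using dr_R by blast
next
  case False
  then have "dr s w = (SOME a. Vsq s w \<le> Qv P r Vsq s w a)" unfolding dr_def by metis
  then show ?thesis using someI_ex[OF F3[of s w]] by simp
qed

abbreviation u where "u n s w \<equiv> H P r c (pol r dr w) s n w"

definition us :: "'s \<Rightarrow> real \<Rightarrow> real" where "us s w = (SUP n. u n s w)"

lemma u_bdd: "bdd_above (range (\<lambda>n. u n s w))"
  using H_le1 by (intro bdd_aboveI[of _ 1]) auto

lemma us_lim: "(\<lambda>n. u n s w) \<longlonglongrightarrow> us s w"
  unfolding us_def by (rule LIMSEQ_incseq_SUP[OF u_bdd]) (rule incseq_SucI, rule H_mono_pos[OF pos])

lemma us_le: "us s w \<le> Vsq s w"
  unfolding us_def by (rule cSUP_least) (auto intro: order_trans[OF H_le_Vq Vsq_ge])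

lemma us_nonneg: "0 \<le> us s w"
  by (rule LIMSEQ_le_const[OF us_lim]) (use H_nonneg in blast)

lemma us_fix: "us s w = (\<Sum>s'\<in>UNIV. pmf (P s (dr s w)) s' * us s' (w + r s (dr s w)))"
proof -
  have l1: "(\<lambda>n. u (Suc n) s w) \<longlonglongrightarrow> us s w" using us_lim by (rule LIMSEQ_Suc)
  have l2: "(\<lambda>n. u (Suc n) s w) \<longlonglongrightarrow> (\<Sum>s'\<in>UNIV. pmf (P s (dr s w)) s' * us s' (w + r s (dr s w)))"
    unfolding H_pol_Suc by (intro tendsto_sum tendsto_mult_left us_lim)
  show ?thesis using LIMSEQ_unique[OF l1 l2] .
qed

lemma us_target: "c \<le> w \<Longrightarrow> us s w = 1"
proof -
  assume "c \<le> w"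
  then have "\<And>n. u n s w = 1" by (intro H_True) (use hw_nonneg in \<open>auto intro: order_trans\<close>)
  then show "us s w = 1" unfolding us_def by simp
qed

lemma us_eq_Vs: "(s,w) \<in> X \<Longrightarrow> us s w = Vsq s w"
proof (rule ccontr)
  assume x0: "(s,w) \<in> X" and ne: "us s w \<noteq> Vsq s w"
  define e where "e = (\<lambda>(s,w). Vsq s w - us s w)"
  have e0: "0 \<le> e x" for x unfolding e_def using us_le by (auto simp: case_prod_beta)
  have epos: "0 < e (s,w)" using e0[of "(s,w)"] ne unfolding e_def by simp
  define m where "m = Max (e ` X)"
  have mge: "x \<in> X \<Longrightarrow> e x \<le> m" for x unfolding m_def using X_fin by (auto intro!: Max_ge)
  have mpos: "0 < m" using mge[OF x0] epos by linarith
  define M where "M = {x \<in> X. e x = m}"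
  have Mfin: "finite M" using X_fin unfolding M_def by simp
  have "m \<in> e ` X" unfolding m_def using X_fin x0 by (intro Max_in) auto
  then have Mne: "M \<noteq> {}" unfolding M_def by auto
  have closed: "(s', w' + r s'' (dr s'' w')) \<in> M" if xM: "(s'', w') \<in> M" and pp: "0 < pmf (P s'' (dr s'' w')) s'" for s'' w' s'
  proof -
    let ?a = "dr s'' w'"
    let ?w = "w' + r s'' ?a"
    have xX: "(s'',w') \<in> X" using xM unfolding M_def by auto
    have succ_le: "e (t, ?w) \<le> m" for t
    proof (cases "c \<le> ?w")
      case True then show ?thesis using Vsq_target us_target mpos unfolding e_def by simp
    next
      case False then show ?thesis using X_succ[OF xX False] mge by blast
    qed
    let ?g = "\<lambda>t. pmf (P s'' ?a) t * (m - e (t, ?w))"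
    have g0: "0 \<le> ?g t" for t using succ_le[of t] by simp
    have A: "Vsq s'' w' \<le> (\<Sum>t\<in>UNIV. pmf (P s'' ?a) t * Vsq t ?w)" using dr_A[of s'' w'] by (simp add: Qv_def)
    have U: "us s'' w' = (\<Sum>t\<in>UNIV. pmf (P s'' ?a) t * us t ?w)" by (rule us_fix)
    have mm: "m = Vsq s'' w' - us s'' w'" using xM unfolding M_def e_def by simp
    have diff: "(\<Sum>t\<in>UNIV. pmf (P s'' ?a) t * Vsq t ?w) - (\<Sum>t\<in>UNIV. pmf (P s'' ?a) t * us t ?w)
        = (\<Sum>t\<in>UNIV. pmf (P s'' ?a) t * e (t, ?w))"
      by (simp add: e_def sum_subtractf[symmetric] right_diff_distrib)
    have me: "m \<le> (\<Sum>t\<in>UNIV. pmf (P s'' ?a) t * e (t, ?w))" using A U mm diff by linarith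
    have gs: "(\<Sum>t\<in>UNIV. ?g t) = (\<Sum>t\<in>UNIV. pmf (P s'' ?a) t * m) - (\<Sum>t\<in>UNIV. pmf (P s'' ?a) t * e (t, ?w))"
      by (simp add: right_diff_distrib sum_subtractf)
    have "(\<Sum>t\<in>UNIV. pmf (P s'' ?a) t * m) = m" by (simp add: sum_distrib_right[symmetric] sum_pmf_1)
    then have "(\<Sum>t\<in>UNIV. ?g t) \<le> 0" using gs me by linarith
    then have "?g s' = 0" using sum_zero_terms[of ?g] g0 by blast
    then have em: "e (s', ?w) = m" using pp by simp
    have "\<not> c \<le> ?w" using em mpos Vsq_target us_target unfolding e_def by auto
    then have "(s', ?w) \<in> X" by (rule X_succ[OF xX])
    then show ?thesis using em unfolding M_def by auto
  qed
  have Mranked: "x \<in> M \<Longrightarrow> \<exists>n. x \<in> Rq n" for x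
  proof -
    assume xM: "x \<in> M"
    obtain s'' w' where x: "x = (s'', w')" by fastforce
    have "0 < Vsq s'' w'" using xM mpos us_nonneg[of s'' w'] unfolding M_def e_def x by auto
    then show ?thesis using ranked xM unfolding M_def x by auto
  qed
  define k where "k = Min (rank ` M)"
  have "k \<in> rank ` M" unfolding k_def using Mfin Mne by (intro Min_in) auto
  then obtain s'' w' where xM: "(s'', w') \<in> M" and rk: "rank (s'', w') = k" by auto
  obtain n where xR: "(s'', w') \<in> Rq n" using Mranked[OF xM] by auto
  have wc: "w' < c" using xM X_lt unfolding M_def by auto
  from dr_R[OF xR wc] obtain s' where pp: "0 < pmf (P s'' (dr s'' w')) s'"
    and yR: "(s', w' + r s'' (dr s'' w')) \<in> Rq (rank (s'',w') - 1)" and rpos: "0 < rank (s'', w')" by auto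
  have yM: "(s', w' + r s'' (dr s'' w')) \<in> M" by (rule closed[OF xM pp])
  have "rank (s', w' + r s'' (dr s'' w')) \<le> rank (s'',w') - 1"
    unfolding rank_def[of "(s', _)"] by (rule Least_le) (rule yR)
  also have "\<dots> < k" using rk rpos by simp
  also have "k \<le> rank (s', w' + r s'' (dr s'' w'))" unfolding k_def using Mfin yM by (intro Min_le) auto
  finally show False by simp
qed

theorem reach_opt: "sdwm_policy r (pol r dr 0) \<and> (\<forall>\<pi>. pr P r c \<pi> s0 \<le> pr P r c (pol r dr 0) s0)"
proof (intro conjI allI)
  show "sdwm_policy r (pol r dr 0)" by (rule sdwm_pol)
  fix \<pi>
  have "pr P r c \<pi> s0 \<le> Vsq s0 0"
    by (rule LIMSEQ_le_const2[OF pr_pos[OF pos]]) (meson H_le_Vq Vsq_ge order_trans)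
  also have "Vsq s0 0 = us s0 0"
  proof (cases "c \<le> 0")
    case True then show ?thesis using Vsq_target us_target by simp
  next
    case False
    have "(s0, 0) \<in> X" unfolding X_def Dw_def using False by (auto intro: image_eqI[of _ _ "[]"])
    then show ?thesis using us_eq_Vs by simp
  qed
  also have "us s0 0 = pr P r c (pol r dr 0) s0"
    using LIMSEQ_unique[OF us_lim pr_pos[OF pos]] by simp
  finally show "pr P r c \<pi> s0 \<le> pr P r c (pol r dr 0) s0" .
qed

end


lemma gap_up:
  fixes x :: real
  assumes fin: "finite (D \<inter> {x..x+1})"
  shows "\<exists>y>x. \<forall>d\<in>D. \<not> (x < d \<and> d < y)"
proof -
  define B where "B = {d \<in> D \<inter> {x..x+1}. x < d}"
  have Bfin: "finite B" using fin unfolding B_def by (rule finite_subset[rotated]) auto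
  define y where "y = (if B = {} then x + 1 else Min B)"
  have yx: "y > x" unfolding y_def using Bfin by (auto simp: B_def)
  have "\<not> (x < d \<and> d < y)" if "d \<in> D" for d
  proof
    assume a: "x < d \<and> d < y"
    have "y \<le> x + 1" unfolding y_def using Bfin by (auto simp: B_def intro: order_trans[OF Min_le])
    then have "d \<in> B" using a that unfolding B_def by auto
    then have "y \<le> d" unfolding y_def using Bfin by auto
    then show False using a by simp
  qed
  then show ?thesis using yx by blast
qed

lemma gap_down:
  fixes x :: real
  assumes fin: "finite (D \<inter> {x-1..x})"
  shows "\<exists>y<x. \<forall>d\<in>D. \<not> (y < d \<and> d < x)"
proof -
  define B where "B = {d \<in> D \<inter> {x-1..x}. d < x}"
  have Bfin: "finite B" using fin unfolding B_def by (rule finite_subset[rotated]) auto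
  define y where "y = (if B = {} then x - 1 else Max B)"
  have yx: "y < x" unfolding y_def using Bfin by (auto simp: B_def)
  have "\<not> (y < d \<and> d < x)" if "d \<in> D" for d
  proof
    assume a: "y < d \<and> d < x"
    have "x - 1 \<le> y" unfolding y_def using Bfin by (auto simp: B_def intro: order_trans[OF _ Max_ge])
    then have "d \<in> B" using a that unfolding B_def by auto
    then have "d \<le> y" unfolding y_def using Bfin by auto
    then show False using a by simp
  qed
  then show ?thesis using yx by blast
qed

context
  fixes M :: "'w measure" and W :: "'w \<Rightarrow> ereal" and D :: "real set"
  assumes ps: "prob_space M"
    and Wm: "W \<in> borel_measurable M"
    and WD: "\<And>\<omega>. \<omega> \<in> space M \<Longrightarrow> W \<omega> = -\<infinity> \<or> W \<omega> = \<infinity> \<or> (\<exists>d\<in>D. W \<omega> = ereal d)"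
    and Dfin: "\<And>a b. finite (D \<inter> {a..b})"
begin

interpretation prob_space M by (rule ps)

definition Fw :: "ereal \<Rightarrow> real" where "Fw w = measure M {\<omega>\<in>space M. W \<omega> \<le> w}"
definition Gw :: "ereal \<Rightarrow> real" where "Gw w = measure M {\<omega>\<in>space M. w \<le> W \<omega>}"

lemma setsF[measurable]: "{\<omega>\<in>space M. W \<omega> \<le> w} \<in> sets M"
  using Wm by measurable

lemma setsG[measurable]: "{\<omega>\<in>space M. w \<le> W \<omega>} \<in> sets M"
  using Wm by measurable

lemma F_mono: "v \<le> w \<Longrightarrow> Fw v \<le> Fw w"
  unfolding Fw_def by (intro finite_measure_mono) (auto intro: order_trans)

lemma G_mono: "v \<le> w \<Longrightarrow> Gw w \<le> Gw v"
  unfolding Gw_def by (intro finite_measure_mono) (auto intro: order_trans)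

lemma F_inf: "Fw \<infinity> = 1"
  unfolding Fw_def by (simp add: prob_space)

lemma G_minf: "Gw (-\<infinity>) = 1"
  unfolding Gw_def by (simp add: prob_space)

lemma F_flat:
  assumes "x \<le> z" "\<forall>d\<in>D. \<not> (x < d \<and> d \<le> z)"
  shows "Fw (ereal x) = Fw (ereal z)"
proof -
  have "{\<omega>\<in>space M. W \<omega> \<le> ereal x} = {\<omega>\<in>space M. W \<omega> \<le> ereal z}"
  proof (intro set_eqI iffI)
    fix \<omega> assume "\<omega> \<in> {\<omega>\<in>space M. W \<omega> \<le> ereal z}"
    then have sp: "\<omega> \<in> space M" and le: "W \<omega> \<le> ereal z" by auto
    show "\<omega> \<in> {\<omega>\<in>space M. W \<omega> \<le> ereal x}"
      using WD[OF sp] le assms(2) sp by (auto simp: not_le)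
  qed (use assms(1) in \<open>auto intro: order_trans\<close>)
  then show ?thesis unfolding Fw_def by simp
qed

lemma G_flat:
  assumes "z \<le> x" "\<forall>d\<in>D. \<not> (z \<le> d \<and> d < x)"
  shows "Gw (ereal x) = Gw (ereal z)"
proof -
  have "{\<omega>\<in>space M. ereal x \<le> W \<omega>} = {\<omega>\<in>space M. ereal z \<le> W \<omega>}"
  proof (intro set_eqI iffI)
    fix \<omega> assume "\<omega> \<in> {\<omega>\<in>space M. ereal z \<le> W \<omega>}"
    then have sp: "\<omega> \<in> space M" and le: "ereal z \<le> W \<omega>" by auto
    show "\<omega> \<in> {\<omega>\<in>space M. ereal x \<le> W \<omega>}"
      using WD[OF sp] le assms(2) sp by (auto simp: not_le)
  next
    fix \<omega> assume a: "\<omega> \<in> {\<omega>\<in>space M. ereal x \<le> W \<omega>}"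
    have "ereal z \<le> ereal x" using assms(1) by simp
    also have "ereal x \<le> W \<omega>" using a by simp
    finally show "\<omega> \<in> {\<omega>\<in>space M. ereal z \<le> W \<omega>}" using a by simp
  qed
  then show ?thesis unfolding Gw_def by simp
qed

lemma F_minf:
  assumes "\<And>n::nat. \<tau> \<le> Fw (ereal (- real n))"
  shows "\<tau> \<le> Fw (-\<infinity>)"
proof -
  let ?A = "\<lambda>n::nat. {\<omega>\<in>space M. W \<omega> \<le> ereal (- real n)}"
  have ev: "range ?A \<subseteq> events" by auto
  have dec: "decseq ?A" by (rule decseq_SucI) (auto intro: order_trans)
  have eq: "(\<Inter>n. ?A n) = {\<omega>\<in>space M. W \<omega> \<le> -\<infinity>}"
  proof (intro set_eqI iffI)
    fix \<omega> assume a: "\<omega> \<in> (\<Inter>n. ?A n)"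
    then have sp: "\<omega> \<in> space M" by auto
    have "W \<omega> = -\<infinity>"
    proof (cases "W \<omega>")
      case (real v)
      obtain n :: nat where n: "real n > - v" using reals_Archimedean2 by blast
      have "\<omega> \<in> ?A n" using a by blast
      then have "v \<le> - real n" using real by simp
      then show ?thesis using n by linarith
    next
      case PInf then show ?thesis using a by auto
    qed simp
    then show "\<omega> \<in> {\<omega>\<in>space M. W \<omega> \<le> -\<infinity>}" using sp by simp
  qed auto
  have "(\<lambda>n. measure M (?A n)) \<longlonglongrightarrow> measure M (\<Inter>n. ?A n)"
    by (rule finite_Lim_measure_decseq[OF ev dec])
  then show ?thesis unfolding Fw_def eq[symmetric]
    by (rule LIMSEQ_le_const) (use assms in \<open>auto simp: Fw_def\<close>)
qed

lemma G_pinf: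
  assumes "\<And>n::nat. \<tau> \<le> Gw (ereal (real n))"
  shows "\<tau> \<le> Gw \<infinity>"
proof -
  let ?A = "\<lambda>n::nat. {\<omega>\<in>space M. ereal (real n) \<le> W \<omega>}"
  have ev: "range ?A \<subseteq> events" by auto
  have dec: "decseq ?A"
  proof (rule decseq_SucI)
    fix n
    show "?A (Suc n) \<subseteq> ?A n"
    proof
      fix \<omega> assume a: "\<omega> \<in> ?A (Suc n)"
      have "ereal (real n) \<le> ereal (real (Suc n))" by simp
      also have "\<dots> \<le> W \<omega>" using a by simp
      finally show "\<omega> \<in> ?A n" using a by simp
    qed
  qed
  have eq: "(\<Inter>n. ?A n) = {\<omega>\<in>space M. \<infinity> \<le> W \<omega>}"
  proof (intro set_eqI iffI)
    fix \<omega> assume a: "\<omega> \<in> (\<Inter>n. ?A n)"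
    then have sp: "\<omega> \<in> space M" by auto
    have "W \<omega> = \<infinity>"
    proof (cases "W \<omega>")
      case (real v)
      obtain n :: nat where n: "real n > v" using reals_Archimedean2 by blast
      have "\<omega> \<in> ?A n" using a by blast
      then have "real n \<le> v" using real by simp
      then show ?thesis using n by linarith
    next
      case MInf then show ?thesis using a by auto
    qed simp
    then show "\<omega> \<in> {\<omega>\<in>space M. \<infinity> \<le> W \<omega>}" using sp by simp
  qed auto
  have "(\<lambda>n. measure M (?A n)) \<longlonglongrightarrow> measure M (\<Inter>n. ?A n)"
    by (rule finite_Lim_measure_decseq[OF ev dec])
  then show ?thesis unfolding Gw_def eq[symmetric]
    by (rule LIMSEQ_le_const) (use assms in \<open>auto simp: Gw_def\<close>)
qed

lemma lower_exists:
  assumes "\<tau> \<le> 1"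
  shows "\<tau> \<le> Fw (Inf {w. \<tau> \<le> Fw w})"
proof -
  let ?S = "{w. \<tau> \<le> Fw w}"
  have inS: "\<infinity> \<in> ?S" using assms F_inf by simp
  show ?thesis
  proof (cases "Inf ?S")
    case PInf then show ?thesis using inS by (metis Inf_lower mem_Collect_eq top.extremum_uniqueI top_ereal_def)
  next
    case (real x)
    obtain y where y: "y > x" "\<forall>d\<in>D. \<not> (x < d \<and> d < y)" using gap_up[OF Dfin] by blast
    have "Inf ?S < ereal y" using real y by simp
    then obtain z where z: "z \<in> ?S" "z < ereal y" by (auto simp: Inf_less_iff)
    have zx: "ereal x \<le> z" using z real by (metis Inf_lower)
    show ?thesis
    proof (cases "z = ereal x")
      case True then show ?thesis using z real by simp
    next
      case False
      then obtain zr where zr: "z = ereal zr" "x < zr" "zr < y" using zx z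
        by (cases z) auto
      have "Fw (ereal x) = Fw (ereal zr)" using zr y by (intro F_flat) auto
      then show ?thesis using z zr real by simp
    qed
  next
    case MInf
    have "\<tau> \<le> Fw (ereal (- real n))" for n
    proof -
      have "Inf ?S < ereal (- real n)" using MInf by simp
      then obtain z where z: "z \<in> ?S" "z < ereal (- real n)" by (auto simp: Inf_less_iff)
      then show ?thesis using F_mono[OF less_imp_le[OF z(2)]] by simp
    qed
    then show ?thesis using F_minf MInf by simp
  qed
qed

lemma upper_exists:
  assumes "0 \<le> \<tau>"
  shows "1 - \<tau> \<le> Gw (Sup {w. 1 - \<tau> \<le> Gw w})"
proof -
  let ?S = "{w. 1 - \<tau> \<le> Gw w}"
  have inS: "-\<infinity> \<in> ?S" using assms G_minf by simp
  show ?thesis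
  proof (cases "Sup ?S")
    case MInf then show ?thesis using inS by (metis Sup_upper mem_Collect_eq bot.extremum_uniqueI bot_ereal_def)
  next
    case (real x)
    obtain y where y: "y < x" "\<forall>d\<in>D. \<not> (y < d \<and> d < x)" using gap_down[OF Dfin] by blast
    have "ereal y < Sup ?S" using real y by simp
    then obtain z where z: "z \<in> ?S" "ereal y < z" by (auto simp: less_Sup_iff)
    have zx: "z \<le> ereal x" using z real by (metis Sup_upper)
    show ?thesis
    proof (cases "z = ereal x")
      case True then show ?thesis using z real by simp
    next
      case False
      then obtain zr where zr: "z = ereal zr" "zr < x" "y < zr" using zx z
        by (cases z) auto
      have "Gw (ereal x) = Gw (ereal zr)" using zr y by (intro G_flat) auto
      then show ?thesis using z zr real by simp
    qed
  next
    case PInf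
    have "1 - \<tau> \<le> Gw (ereal (real n))" for n
    proof -
      have "ereal (real n) < Sup ?S" using PInf by simp
      then obtain z where z: "z \<in> ?S" "ereal (real n) < z" by (auto simp: less_Sup_iff)
      then show ?thesis using G_mono[OF less_imp_le[OF z(2)]] by simp
    qed
    then show ?thesis using G_pinf PInf by simp
  qed
qed

lemma lower_is:
  assumes "\<tau> \<le> 1"
  shows "(LEAST w. \<tau> \<le> Fw w) = Inf {w. \<tau> \<le> Fw w}"
  by (rule Least_equality) (use lower_exists[OF assms] in \<open>auto intro: Inf_lower\<close>)

lemma upper_is:
  assumes "0 \<le> \<tau>"
  shows "(GREATEST w. 1 - \<tau> \<le> Gw w) = Sup {w. 1 - \<tau> \<le> Gw w}"
  by (rule Greatest_equality) (use upper_exists[OF assms] in \<open>auto intro: Sup_upper\<close>)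

lemma compl_le:
  "Fw (ereal y) = 1 - Gw (ereal c)" if "\<forall>d\<in>D. \<not> (y < d \<and> d < c)" "y < c"
proof -
  have "{\<omega>\<in>space M. W \<omega> \<le> ereal y} = space M - {\<omega>\<in>space M. ereal c \<le> W \<omega>}"
  proof (intro set_eqI iffI)
    fix \<omega> assume "\<omega> \<in> space M - {\<omega>\<in>space M. ereal c \<le> W \<omega>}"
    then have sp: "\<omega> \<in> space M" and lt: "W \<omega> < ereal c" by auto
    show "\<omega> \<in> {\<omega>\<in>space M. W \<omega> \<le> ereal y}" using WD[OF sp] lt that sp by (auto simp: not_le)
  next
    fix \<omega> assume "\<omega> \<in> {\<omega>\<in>space M. W \<omega> \<le> ereal y}"
    then show "\<omega> \<in> space M - {\<omega>\<in>space M. ereal c \<le> W \<omega>}" using that(2)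
      by (auto simp: not_le) (metis ereal_less_eq(3) leD order_trans less_le_not_le)
  qed
  then show ?thesis unfolding Fw_def Gw_def by (simp add: prob_compl)
qed

lemma lower_char:
  assumes "0 < \<tau>" "\<tau> \<le> 1"
  shows "ereal c \<le> (LEAST w. \<tau> \<le> Fw w) \<longleftrightarrow> 1 - \<tau> < Gw (ereal c)"
proof -
  let ?q = "Inf {w. \<tau> \<le> Fw w}"
  obtain y where y: "y < c" "\<forall>d\<in>D. \<not> (y < d \<and> d < c)" using gap_down[OF Dfin] by blast
  have Fy: "Fw (ereal y) = 1 - Gw (ereal c)" using compl_le y by blast
  have "ereal c \<le> ?q \<longleftrightarrow> 1 - \<tau> < Gw (ereal c)"
  proof
    assume a: "ereal c \<le> ?q"
    have "\<not> \<tau> \<le> Fw (ereal y)"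
    proof
      assume "\<tau> \<le> Fw (ereal y)"
      then have "?q \<le> ereal y" by (intro Inf_lower) simp
      then have "ereal c \<le> ereal y" using a by (rule order_trans[rotated])
      then show False using y by simp
    qed
    then show "1 - \<tau> < Gw (ereal c)" using Fy by simp
  next
    assume a: "1 - \<tau> < Gw (ereal c)"
    show "ereal c \<le> ?q"
    proof (rule ccontr)
      assume "\<not> ereal c \<le> ?q"
      then have lt: "?q < ereal c" by simp
      have "\<tau> \<le> Fw ?q" by (rule lower_exists[OF assms(2)])
      also have "Fw ?q \<le> Fw (ereal y)"
      proof (cases ?q)
        case (real x)
        have "x < c" using lt real by simp
        show ?thesis
        proof (cases "x \<le> y")
          case True then show ?thesis using real F_mono by simp
        next
          case False
          have "Fw (ereal y) = Fw (ereal x)" using False \<open>x < c\<close> y by (intro F_flat) auto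
          then show ?thesis using real by simp
        qed
      qed (use F_mono lt in auto)
      finally show False using Fy a by simp
    qed
  qed
  then show ?thesis using lower_is[OF assms(2)] by simp
qed

lemma upper_char:
  assumes "0 \<le> \<tau>"
  shows "ereal c \<le> (GREATEST w. 1 - \<tau> \<le> Gw w) \<longleftrightarrow> 1 - \<tau> \<le> Gw (ereal c)"
proof -
  let ?q = "Sup {w. 1 - \<tau> \<le> Gw w}"
  have "ereal c \<le> ?q \<longleftrightarrow> 1 - \<tau> \<le> Gw (ereal c)"
  proof
    assume "ereal c \<le> ?q"
    then have "Gw ?q \<le> Gw (ereal c)" by (rule G_mono)
    then show "1 - \<tau> \<le> Gw (ereal c)" using upper_exists[OF assms] by linarith
  next
    assume "1 - \<tau> \<le> Gw (ereal c)"
    then show "ereal c \<le> ?q" by (intro Sup_upper) simp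
  qed
  then show ?thesis using upper_is[OF assms] by simp
qed

end

lemma assemble:
  fixes q :: "'p \<Rightarrow> ereal" and pr' :: "'p \<Rightarrow> real \<Rightarrow> real" and \<Phi> :: "real \<Rightarrow> bool" and SD :: "'p \<Rightarrow> bool"
  assumes Dfin: "\<And>a b. finite (D \<inter> {a..b})"
    and ub: "\<And>\<pi>. q \<pi> \<le> ereal U"
    and char: "\<And>\<pi> c. ereal c \<le> q \<pi> \<longleftrightarrow> \<Phi> (pr' \<pi> c)"
    and \<Phi>mono: "\<And>p p'. \<Phi> p \<Longrightarrow> p \<le> p' \<Longrightarrow> \<Phi> p'"
    and flat: "\<And>\<pi> x y. x \<le> y \<Longrightarrow> \<forall>d\<in>D. \<not> (x \<le> d \<and> d < y) \<Longrightarrow> pr' \<pi> x = pr' \<pi> y"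
    and opt: "\<And>c. \<exists>\<sigma>. SD \<sigma> \<and> (\<forall>\<pi>. pr' \<pi> c \<le> pr' \<sigma> c)"
  shows "\<exists>\<sigma>. SD \<sigma> \<and> (\<forall>\<pi>. q \<pi> \<le> q \<sigma>)"
proof -
  have inD: "\<exists>d\<in>D. q \<pi> = ereal d" if ne: "q \<pi> \<noteq> -\<infinity>" for \<pi>
  proof -
    obtain x where x: "q \<pi> = ereal x" using ne ub[of \<pi>] by (cases "q \<pi>") auto
    show ?thesis
    proof (rule ccontr)
      assume "\<not> ?thesis"
      then have xD: "x \<notin> D" using x by auto
      obtain y where y: "y > x" "\<forall>d\<in>D. \<not> (x < d \<and> d < y)" using gap_up[OF Dfin] by blast
      have y': "\<forall>d\<in>D. \<not> (x \<le> d \<and> d < y)" using y xD by (auto simp: le_less)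
      have "\<Phi> (pr' \<pi> x)" using char[of x \<pi>] x by simp
      then have "\<Phi> (pr' \<pi> y)" using flat[of x y \<pi>] y y' by simp
      then have "ereal y \<le> q \<pi>" using char by simp
      then show False using x y by simp
    qed
  qed
  show ?thesis
  proof (cases "\<forall>\<pi>. q \<pi> = -\<infinity>")
    case True
    obtain \<sigma> where "SD \<sigma>" using opt[of 0] by blast
    then show ?thesis using True by auto
  next
    case False
    then obtain \<pi>0 where "q \<pi>0 \<noteq> -\<infinity>" by auto
    then obtain x0 where x0: "x0 \<in> D" "q \<pi>0 = ereal x0" using inD by blast
    define K where "K = {x \<in> D \<inter> {x0..U}. \<exists>\<pi>. q \<pi> = ereal x}"
    have Kfin: "finite K" unfolding K_def using Dfin[of x0 U] by (rule finite_subset[rotated]) auto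
    have x0K: "x0 \<in> K" unfolding K_def using x0 ub[of \<pi>0] by auto
    define c where "c = Max K"
    have "c \<in> K" unfolding c_def using Kfin x0K by (intro Max_in) auto
    then obtain \<pi>1 where \<pi>1: "q \<pi>1 = ereal c" unfolding K_def by auto
    obtain \<sigma> where \<sigma>: "SD \<sigma>" "\<forall>\<pi>. pr' \<pi> c \<le> pr' \<sigma> c" using opt[of c] by blast
    have "\<Phi> (pr' \<pi>1 c)" using char[of c \<pi>1] \<pi>1 by simp
    then have "\<Phi> (pr' \<sigma> c)" using \<sigma>(2) \<Phi>mono by blast
    then have c\<sigma>: "ereal c \<le> q \<sigma>" using char by simp
    have "q \<pi> \<le> q \<sigma>" for \<pi>
    proof (cases "q \<pi> = -\<infinity>")
      case True then show ?thesis by simp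
    next
      case False
      then obtain x where x: "x \<in> D" "q \<pi> = ereal x" using inD by blast
      have "x \<le> c"
      proof (cases "x < x0")
        case True
        moreover have "x0 \<le> c" unfolding c_def using Kfin x0K by (intro Max_ge)
        ultimately show ?thesis by simp
      next
        case False
        then have "x \<in> K" unfolding K_def using x ub[of \<pi>] by auto
        then show ?thesis unfolding c_def using Kfin by (intro Max_ge)
      qed
      then show ?thesis using x c\<sigma> by (metis ereal_less_eq(3) order_trans)
    qed
    then show ?thesis using \<sigma>(1) by blast
  qed
qed


context
  fixes P :: "'s::finite \<Rightarrow> 'a::finite \<Rightarrow> 's pmf"
    and r :: "'s \<Rightarrow> 'a \<Rightarrow> real"
    and s0 :: 's
  assumes ok: "sgn_ok r"
begin

lemma pm_prob: "prob_space (path_measure P s0 \<pi>)"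
  by (rule path_measure_props(2))

lemma pm_Wm: "ep_wealth r \<in> borel_measurable (path_measure P s0 \<pi>)"
  using ep_wealth_meas[OF ok] by (simp add: measurable_cong_sets[OF path_measure_props(1) refl])

lemma pm_WD: "\<omega> \<in> space (path_measure P s0 \<pi>) \<Longrightarrow>
   ep_wealth r \<omega> = -\<infinity> \<or> ep_wealth r \<omega> = \<infinity> \<or> (\<exists>d\<in>Dw r. ep_wealth r \<omega> = ereal d)"
  using ep_wealth_in_D[OF ok] by blast

lemma pm_Dfin: "finite (Dw r \<inter> {a..b})"
  by (rule Dw_fin[OF ok])

lemmas facts = pm_prob pm_Wm pm_WD pm_Dfin

lemma lq_eq: "lower_quantile P r s0 \<pi> \<tau> = (LEAST w. \<tau> \<le> Fw (path_measure P s0 \<pi>) (ep_wealth r) w)"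
  unfolding lower_quantile_def cdf_w_def by (simp add: Fw_def[OF facts])

lemma uq_eq: "upper_quantile P r s0 \<pi> \<tau> = (GREATEST w. 1 - \<tau> \<le> Gw (path_measure P s0 \<pi>) (ep_wealth r) w)"
  unfolding upper_quantile_def dcdf_w_def by (simp add: Gw_def[OF facts])

lemma pr_eq: "pr P r c \<pi> s0 = Gw (path_measure P s0 \<pi>) (ep_wealth r) (ereal c)"
  unfolding pr_def by (simp add: Gw_def[OF facts])

lemma opt: "\<exists>\<sigma>. sdwm_policy r \<sigma> \<and> (\<forall>\<pi>. pr P r c \<pi> s0 \<le> pr P r c \<sigma> s0)"
proof (cases "\<forall>s a. r s a \<le> 0")
  case True
  from safety_opt[OF True] show ?thesis by blast
next
  case False
  then have "\<forall>s a. r s a \<ge> 0" using ok unfolding sgn_ok_def by auto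
  from reach_opt[OF this] show ?thesis by blast
qed

lemma flat: "x \<le> y \<Longrightarrow> \<forall>d\<in>Dw r. \<not> (x \<le> d \<and> d < y) \<Longrightarrow> pr P r y \<pi> s0 = pr P r x \<pi> s0"
  unfolding pr_eq by (rule G_flat[OF facts])

lemma lower_opt:
  assumes \<tau>: "0 < \<tau>" "\<tau> \<le> 1" and ub: "\<And>\<pi>. lower_quantile P r s0 \<pi> \<tau> \<le> ereal U"
  shows "\<exists>\<sigma>. sdwm_policy r \<sigma> \<and> (\<forall>\<pi>. lower_quantile P r s0 \<pi> \<tau> \<le> lower_quantile P r s0 \<sigma> \<tau>)"
proof (rule assemble[where D = "Dw r" and U = U and pr' = "\<lambda>\<pi> c. pr P r c \<pi> s0" and \<Phi> = "\<lambda>p. 1 - \<tau> < p"])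
  show "finite (Dw r \<inter> {a..b})" for a b by (rule pm_Dfin)
  show "lower_quantile P r s0 \<pi> \<tau> \<le> ereal U" for \<pi> by (rule ub)
  show "ereal c \<le> lower_quantile P r s0 \<pi> \<tau> \<longleftrightarrow> 1 - \<tau> < pr P r c \<pi> s0" for \<pi> c
    unfolding lq_eq pr_eq by (rule lower_char[OF facts \<tau>])
  show "1 - \<tau> < p \<Longrightarrow> p \<le> p' \<Longrightarrow> 1 - \<tau> < p'" for p p' by simp
  show "x \<le> y \<Longrightarrow> \<forall>d\<in>Dw r. \<not> (x \<le> d \<and> d < y) \<Longrightarrow> pr P r x \<pi> s0 = pr P r y \<pi> s0" for \<pi> x y
    using flat by metis
  show "\<exists>\<sigma>. sdwm_policy r \<sigma> \<and> (\<forall>\<pi>. pr P r c \<pi> s0 \<le> pr P r c \<sigma> s0)" for c by (rule opt)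
qed

lemma upper_opt:
  assumes \<tau>: "0 \<le> \<tau>" and ub: "\<And>\<pi>. upper_quantile P r s0 \<pi> \<tau> \<le> ereal U"
  shows "\<exists>\<sigma>. sdwm_policy r \<sigma> \<and> (\<forall>\<pi>. upper_quantile P r s0 \<pi> \<tau> \<le> upper_quantile P r s0 \<sigma> \<tau>)"
proof (rule assemble[where D = "Dw r" and U = U and pr' = "\<lambda>\<pi> c. pr P r c \<pi> s0" and \<Phi> = "\<lambda>p. 1 - \<tau> \<le> p"])
  show "finite (Dw r \<inter> {a..b})" for a b by (rule pm_Dfin)
  show "upper_quantile P r s0 \<pi> \<tau> \<le> ereal U" for \<pi> by (rule ub)
  show "ereal c \<le> upper_quantile P r s0 \<pi> \<tau> \<longleftrightarrow> 1 - \<tau> \<le> pr P r c \<pi> s0" for \<pi> c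
    unfolding uq_eq pr_eq by (rule upper_char[OF facts \<tau>])
  show "1 - \<tau> \<le> p \<Longrightarrow> p \<le> p' \<Longrightarrow> 1 - \<tau> \<le> p'" for p p' by simp
  show "x \<le> y \<Longrightarrow> \<forall>d\<in>Dw r. \<not> (x \<le> d \<and> d < y) \<Longrightarrow> pr P r x \<pi> s0 = pr P r y \<pi> s0" for \<pi> x y
    using flat by metis
  show "\<exists>\<sigma>. sdwm_policy r \<sigma> \<and> (\<forall>\<pi>. pr P r c \<pi> s0 \<le> pr P r c \<sigma> s0)" for c by (rule opt)
qed

end

context
  fixes P :: "'s::finite \<Rightarrow> 'a::finite \<Rightarrow> 's pmf"
    and r :: "'s \<Rightarrow> 'a \<Rightarrow> real"
    and s0 :: 's
  assumes neg: "\<forall>s a. r s a \<le> 0"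
begin

lemma ok': "sgn_ok r" using neg by (simp add: sgn_ok_def)

lemma W_nonpos: "ep_wealth r \<omega> \<le> 0"
proof -
  have "ep_wealth r \<omega> \<le> ereal (hist_wealth r (stake 0 \<omega>))"
    unfolding ep_wealth_INF[OF neg] by (rule INF_lower) simp
  then show ?thesis by (simp add: zero_ereal_def)
qed

lemma lq_nonpos: "\<tau> \<le> 1 \<Longrightarrow> lower_quantile P r s0 \<pi> \<tau> \<le> ereal 0"
proof -
  assume \<tau>: "\<tau> \<le> 1"
  interpret prob_space "path_measure P s0 \<pi>" by (rule path_measure_props(2))
  have "{\<omega>\<in>space (path_measure P s0 \<pi>). ep_wealth r \<omega> \<le> ereal 0} = space (path_measure P s0 \<pi>)"
    using W_nonpos by (auto simp: zero_ereal_def)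
  then have "Fw (path_measure P s0 \<pi>) (ep_wealth r) (ereal 0) = 1"
    by (simp add: Fw_def[OF facts[OF ok']] prob_space)
  then have "Inf {w. \<tau> \<le> Fw (path_measure P s0 \<pi>) (ep_wealth r) w} \<le> ereal 0"
    using \<tau> by (intro Inf_lower) simp
  moreover have "lower_quantile P r s0 \<pi> \<tau> = Inf {w. \<tau> \<le> Fw (path_measure P s0 \<pi>) (ep_wealth r) w}"
    using lq_eq[OF ok'] lower_is[OF facts[OF ok'] \<tau>] by simp
  ultimately show ?thesis by simp
qed

lemma uq_nonpos: "0 \<le> \<tau> \<Longrightarrow> \<tau> < 1 \<Longrightarrow> upper_quantile P r s0 \<pi> \<tau> \<le> ereal 0"
proof -
  assume \<tau>: "0 \<le> \<tau>" "\<tau> < 1"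
  let ?M = "path_measure P s0 \<pi>"
  let ?q = "Sup {w. 1 - \<tau> \<le> Gw ?M (ep_wealth r) w}"
  have q: "1 - \<tau> \<le> Gw ?M (ep_wealth r) ?q" by (rule upper_exists[OF facts[OF ok'] \<tau>(1)])
  have "?q \<le> 0"
  proof (rule ccontr)
    assume "\<not> ?q \<le> 0"
    then have "\<And>\<omega>. \<not> ?q \<le> ep_wealth r \<omega>" using W_nonpos by (meson order_trans not_le le_less)
    then have e1: "{\<omega>\<in>space ?M. ?q \<le> ep_wealth r \<omega>} = {}" by auto
    have e2: "Gw ?M (ep_wealth r) ?q = measure ?M {\<omega>\<in>space ?M. ?q \<le> ep_wealth r \<omega>}"
      by (rule Gw_def[OF facts[OF ok']])
    have "Gw ?M (ep_wealth r) ?q = 0" by (simp only: e2 e1 measure_empty)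
    then show False using q \<tau> by simp
  qed
  moreover have "upper_quantile P r s0 \<pi> \<tau> = ?q"
    using uq_eq[OF ok'] upper_is[OF facts[OF ok'] \<tau>(1)] by simp
  ultimately show ?thesis by (simp add: zero_ereal_def)
qed

end

theorem proposition3:
  fixes P :: "'s::finite \<Rightarrow> 'a::finite \<Rightarrow> 's pmf"
    and r :: "'s \<Rightarrow> 'a \<Rightarrow> real"
    and s0 :: 's
  shows
    "(\<forall>\<tau>::real. 0 < \<tau> \<and> \<tau> \<le> 1 \<longrightarrow>
        ((\<forall>s a. r s a \<le> 0) \<or>
         ((\<forall>s a. r s a \<ge> 0) \<and>
          (\<exists>B::real. \<forall>\<pi>. lower_quantile P r s0 \<pi> \<tau> \<le> ereal B))) \<longrightarrow>
        (\<exists>\<pi>. sdwm_policy r \<pi> \<and>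
              (\<forall>\<pi>'. lower_quantile P r s0 \<pi>' \<tau> \<le> lower_quantile P r s0 \<pi> \<tau>)))
     \<and>
     (\<forall>\<tau>::real. 0 \<le> \<tau> \<and> \<tau> < 1 \<longrightarrow>
        ((\<forall>s a. r s a \<le> 0) \<or>
         ((\<forall>s a. r s a \<ge> 0) \<and>
          (\<exists>B::real. \<forall>\<pi>. upper_quantile P r s0 \<pi> \<tau> \<le> ereal B))) \<longrightarrow>
        (\<exists>\<pi>. sdwm_policy r \<pi> \<and>
              (\<forall>\<pi>'. upper_quantile P r s0 \<pi>' \<tau> \<le> upper_quantile P r s0 \<pi> \<tau>)))"
proof (intro conjI allI impI)
  fix \<tau> :: real
  assume \<tau>: "0 < \<tau> \<and> \<tau> \<le> 1"
  assume h: "(\<forall>s a. r s a \<le> 0) \<or> ((\<forall>s a. r s a \<ge> 0) \<and> (\<exists>B::real. \<forall>\<pi>. lower_quantile P r s0 \<pi> \<tau> \<le> ereal B))"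
  show "\<exists>\<pi>. sdwm_policy r \<pi> \<and> (\<forall>\<pi>'. lower_quantile P r s0 \<pi>' \<tau> \<le> lower_quantile P r s0 \<pi> \<tau>)"
  proof (cases "\<forall>s a. r s a \<le> 0")
    case True
    have ok: "sgn_ok r" using True by (simp add: sgn_ok_def)
    show ?thesis
      using lower_opt[OF ok, where \<tau>=\<tau> and U=0] lq_nonpos[OF True] \<tau> by blast
  next
    case False
    then have pos: "\<forall>s a. r s a \<ge> 0" and "\<exists>B::real. \<forall>\<pi>. lower_quantile P r s0 \<pi> \<tau> \<le> ereal B" using h by auto
    then obtain B where B: "\<And>\<pi>. lower_quantile P r s0 \<pi> \<tau> \<le> ereal B" by blast
    have ok: "sgn_ok r" using pos by (simp add: sgn_ok_def)
    show ?thesis using lower_opt[OF ok, where \<tau>=\<tau> and U=B] B \<tau> by blast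
  qed
next
  fix \<tau> :: real
  assume \<tau>: "0 \<le> \<tau> \<and> \<tau> < 1"
  assume h: "(\<forall>s a. r s a \<le> 0) \<or> ((\<forall>s a. r s a \<ge> 0) \<and> (\<exists>B::real. \<forall>\<pi>. upper_quantile P r s0 \<pi> \<tau> \<le> ereal B))"
  show "\<exists>\<pi>. sdwm_policy r \<pi> \<and> (\<forall>\<pi>'. upper_quantile P r s0 \<pi>' \<tau> \<le> upper_quantile P r s0 \<pi> \<tau>)"
  proof (cases "\<forall>s a. r s a \<le> 0")
    case True
    have ok: "sgn_ok r" using True by (simp add: sgn_ok_def)
    show ?thesis
      using upper_opt[OF ok, where \<tau>=\<tau> and U=0] uq_nonpos[OF True] \<tau> by blast
  next
    case False
    then have pos: "\<forall>s a. r s a \<ge> 0" and "\<exists>B::real. \<forall>\<pi>. upper_quantile P r s0 \<pi> \<tau> \<le> ereal B" using h by auto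
    then obtain B where B: "\<And>\<pi>. upper_quantile P r s0 \<pi> \<tau> \<le> ereal B" by blast
    have ok: "sgn_ok r" using pos by (simp add: sgn_ok_def)
    show ?thesis using upper_opt[OF ok, where \<tau>=\<tau> and U=B] B \<tau> by blast
  qed
qed


end
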